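(* For $i = 1, \ldots, m-1$ the following hold. (a) $\mathcal{Q}_{i}^{\mathbb{B}}(\lambda \mathcal{D}_{i})\mathcal{R}_{i} = \lambda \mathcal{D}_{i+1} + \mathcal{T}_{i}$, and $\mathcal{Q}_{i}^{\mathbb{B}}(\mathbb{M}_{m-(i+1)}\mathbb{M}_{m-i})\mathcal{R}_{i} = \mathbb{M}_{m-(i+1)} + \mathcal{T}_{i}$. (b) $\mathcal{R}_{i}^{\mathbb{B}}(\lambda \mathcal{D}_{i})\mathcal{Q}_{i} = \lambda \mathcal{D}_{i+1} + \mathcal{T}_{i}^{\mathbb{B}}$, and $\mathcal{R}_{i}^{\mathbb{B}}(\mathbb{M}_{m-i}\mathbb{M}_{m-(i+1)})\mathcal{Q}_{i} = \mathbb{M}_{m-(i+1)} + \mathcal{T}_{i}^{\mathbb{B}}$. (c) $\mathcal{T}_{i}\mathbb{M}_{j} = \mathbb{M}_{j}\mathcal{T}_{i} = \mathcal{T}_{i}$ and $\mathcal{T}_{i}^{\mathbb{B}}\mathbb{M}_{j} = \mathbb{M}_{j}\mathcal{T}_{i}^{\mathbb{B}} = \mathcal{T}_{i}^{\mathbb{B}}$ for all $j \leq m-i-2$.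
   Context: Let $P(\lambda) = \sum_{j=0}^m \lambda^j A_j$ ($A_j\in\mathbb{C}^{n\times n}$, $A_m\ne 0$) and $\mathcal{S}(\lambda) = \left[\begin{array}{c|c} P(\lambda) & C \\ \hline B & A-\lambda E\end{array}\right]$ with $A,E\in\mathbb{C}^{r\times r}$, $B\in\mathbb{C}^{r\times n}$, $C\in\mathbb{C}^{n\times r}$. Fiedler matrices: $M_0=\mathrm{diag}(I_{(m-1)n},-A_0)$, $M_m = \mathrm{diag}(A_m,I_{(m-1)n})$, $M_i=\mathrm{diag}\left(I_{(m-i-1)n},\left[\begin{smallmatrix}-A_i & I_n\\ I_n & 0\end{smallmatrix}\right],I_{(i-1)n}\right)$ for $1\le i\le m-1$; $\mathbb{M}_0 = \left[\begin{array}{c|c} M_0 & -e_m\otimes C\\ \hline -e_m^T\otimes B & -A\end{array}\right]$ ($e_m$ the $m$-th column of $I_m$), $\mathbb{M}_m=\mathrm{diag}(M_m,-E)$, $\mathbb{M}_i=\mathrm{diag}(M_i,I_r)$. Horner shifts: $P_k(\lambda) = A_{m-k}+\lambda A_{m-k+1}+\cdots+\lambda^k A_m$, $k=0,\ldots,m$. For $1\le i\le m-1$ define $nm\times nm$ matrix polynomials $Q_i = \mathrm{diag}\left(I_{(i-1)n},\left[\begin{smallmatrix} I_n & \lambda I_n\\ 0_n & I_n\end{smallmatrix}\right], I_{(m-i-1)n}\right)$, $R_i = \mathrm{diag}\left(I_{(i-1)n},\left[\begin{smallmatrix} 0_n & I_n\\ I_n & P_i(\lambda)\end{smallmatrix}\right],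 I_{(m-i-1)n}\right)$, $T_i = \mathrm{diag}\left(0_{(i-1)n},\left[\begin{smallmatrix} 0_n & \lambda P_{i-1}(\lambda)\\ \lambda I_n & \lambda^2 P_{i-1}(\lambda)\end{smallmatrix}\right], 0_{(m-i-1)n}\right)$, $D_i = \mathrm{diag}(0_{(i-1)n}, P_{i-1}(\lambda), I_{(m-i)n})$, and $D_m = \mathrm{diag}(0_{(m-1)n}, P_{m-1}(\lambda))$. The $(nm+r)\times(nm+r)$ auxiliary system polynomials are $\mathcal{Q}_i = \mathrm{diag}(Q_i, I_r)$, $\mathcal{R}_i=\mathrm{diag}(R_i,I_r)$, $\mathcal{T}_i=\mathrm{diag}(T_i,0_r)$, $\mathcal{D}_i=\mathrm{diag}(D_i,-E)$ ($1\le i\le m$). For a block matrix $H=(H_{ij})$ with $n\times n$ blocks, the block transpose $H^{\mathcal{B}}$ has $(H^{\mathcal{B}})_{ij}=H_{ji}$; for a system matrix $\mathcal{A}=\left[\begin{array}{c|c} A & e_i\otimes X\\ \hline e_j^T\otimes Y & Z\end{array}\right]$ its block transpose is $\mathcal{A}^{\mathbb{B}}=\left[\begin{array}{c|c} A^{\mathcal{B}} & e_j\otimes X\\ \hline e_i^T\otimes Y & Z\end{array}\right]$; in particular $\mathcal{Q}_i^{\mathbb{B}} = \mathrm{diag}(Q_i^{\mathcal{B}}, I_r)$, $\mathcal{R}_i^{\mathbb{B}}=\mathcal{R}_i$, $\mathcal{T}_i^{\mathbb{B}} = \mathrm{diag}(T_i^{\mathcal{B}},0_r)$. *)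

theory Defs
  imports "Jordan_Normal_Form.Matrix" "HOL-Computational_Algebra.Polynomial"
begin

text \<open>Matrix polynomials are represented as matrices with entries in complex poly.
  Block indices are 1-based as in the paper; the n x n blocks of an nm x nm matrix.\<close>

definition lam :: "complex poly" where "lam = [:0, 1:]"

definition cmat :: "complex mat \<Rightarrow> complex poly mat" where
  "cmat X = map_mat (\<lambda>c. [:c:]) X"

text \<open>Horner shift P_k(lambda) = A_{m-k} + lambda A_{m-k+1} + ... + lambda^k A_m.\<close>
definition horner :: "nat \<Rightarrow> nat \<Rightarrow> (nat \<Rightarrow> complex mat) \<Rightarrow> nat \<Rightarrow> complex poly mat" where
  "horner n m A k = mat n n (\<lambda>(a,b). \<Sum>j=0..k. monom (A (m - k + j) $$ (a,b)) j)"

definition blk :: "nat \<Rightarrow> nat \<Rightarrow> (nat \<Rightarrow> nat \<Rightarrow> 'a mat) \<Rightarrow> 'a mat" where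
  "blk n m f = mat (n*m) (n*m) (\<lambda>(a,b). f (a div n + 1) (b div n + 1) $$ (a mod n, b mod n))"

definition block_transpose :: "nat \<Rightarrow> nat \<Rightarrow> 'a mat \<Rightarrow> 'a mat" where
  "block_transpose n m H = mat (n*m) (n*m)
     (\<lambda>(a,b). H $$ ((b div n) * n + a mod n, (a div n) * n + b mod n))"

text \<open>Block transpose of a system matrix [H | e_i (x) X; e_j^T (x) Y | Z] in the case X = 0,
  Y = 0, i.e. of diag(H, Z): it is diag(H^B, Z).\<close>
definition sys_bt_diag :: "nat \<Rightarrow> nat \<Rightarrow> nat \<Rightarrow> 'a::zero mat \<Rightarrow> 'a mat \<Rightarrow> 'a mat" where
  "sys_bt_diag n m r H Z = four_block_mat (block_transpose n m H) (0\<^sub>m (n*m) r) (0\<^sub>m r (n*m)) Z"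

definition Qm :: "nat \<Rightarrow> nat \<Rightarrow> nat \<Rightarrow> complex poly mat" where
  "Qm n m i = blk n m (\<lambda>p q. if p = q then 1\<^sub>m n
      else if p = i \<and> q = i + 1 then lam \<cdot>\<^sub>m 1\<^sub>m n else 0\<^sub>m n n)"

definition Rm :: "nat \<Rightarrow> nat \<Rightarrow> (nat \<Rightarrow> complex mat) \<Rightarrow> nat \<Rightarrow> complex poly mat" where
  "Rm n m A i = blk n m (\<lambda>p q.
      if p = i \<and> q = i then 0\<^sub>m n n
      else if p = i \<and> q = i + 1 then 1\<^sub>m n
      else if p = i + 1 \<and> q = i then 1\<^sub>m n
      else if p = i + 1 \<and> q = i + 1 then horner n m A i
      else if p = q then 1\<^sub>m n else 0\<^sub>m n n)"

definition Tm :: "nat \<Rightarrow> nat \<Rightarrow> (nat \<Rightarrow> complex mat) \<Rightarrow> nat \<Rightarrow> complex poly mat" where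
  "Tm n m A i = blk n m (\<lambda>p q.
      if p = i \<and> q = i + 1 then lam \<cdot>\<^sub>m horner n m A (i - 1)
      else if p = i + 1 \<and> q = i then lam \<cdot>\<^sub>m 1\<^sub>m n
      else if p = i + 1 \<and> q = i + 1 then (lam ^ 2) \<cdot>\<^sub>m horner n m A (i - 1)
      else 0\<^sub>m n n)"

definition Dm :: "nat \<Rightarrow> nat \<Rightarrow> (nat \<Rightarrow> complex mat) \<Rightarrow> nat \<Rightarrow> complex poly mat" where
  "Dm n m A i = blk n m (\<lambda>p q.
      if p \<noteq> q then 0\<^sub>m n n
      else if p < i then 0\<^sub>m n n
      else if p = i then horner n m A (i - 1)
      else 1\<^sub>m n)"

definition fiedler :: "nat \<Rightarrow> nat \<Rightarrow> (nat \<Rightarrow> complex mat) \<Rightarrow> nat \<Rightarrow> complex mat" where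
  "fiedler n m A k =
    (if k = 0 then blk n m (\<lambda>p q. if p \<noteq> q then 0\<^sub>m n n
                               else if p = m then - A 0 else 1\<^sub>m n)
     else if k = m then blk n m (\<lambda>p q. if p \<noteq> q then 0\<^sub>m n n
                               else if p = 1 then A m else 1\<^sub>m n)
     else blk n m (\<lambda>p q.
        if p = m - k \<and> q = m - k then - A k
        else if p = m - k \<and> q = m - k + 1 then 1\<^sub>m n
        else if p = m - k + 1 \<and> q = m - k then 1\<^sub>m n
        else if p = m - k + 1 \<and> q = m - k + 1 then 0\<^sub>m n n
        else if p = q then 1\<^sub>m n else 0\<^sub>m n n))"

definition em_col :: "nat \<Rightarrow> nat \<Rightarrow> nat \<Rightarrow> complex mat \<Rightarrow> complex mat" where
  "em_col n m r C = mat (n*m) r (\<lambda>(a,b). if a div n + 1 = m then C $$ (a mod n, b) else 0)"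

definition em_row :: "nat \<Rightarrow> nat \<Rightarrow> nat \<Rightarrow> complex mat \<Rightarrow> complex mat" where
  "em_row n m r B = mat r (n*m) (\<lambda>(a,b). if b div n + 1 = m then B $$ (a, b mod n) else 0)"

definition sys_fiedler :: "nat \<Rightarrow> nat \<Rightarrow> nat \<Rightarrow> (nat \<Rightarrow> complex mat) \<Rightarrow> complex mat \<Rightarrow> complex mat
    \<Rightarrow> complex mat \<Rightarrow> complex mat \<Rightarrow> nat \<Rightarrow> complex poly mat" where
  "sys_fiedler n m r A Amat E B C k = cmat
    (if k = 0 then four_block_mat (fiedler n m A 0) (- em_col n m r C) (- em_row n m r B) (- Amat)
     else if k = m then four_block_mat (fiedler n m A m) (0\<^sub>m (n*m) r) (0\<^sub>m r (n*m)) (- E)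
     else four_block_mat (fiedler n m A k) (0\<^sub>m (n*m) r) (0\<^sub>m r (n*m)) (1\<^sub>m r))"

definition diag2 :: "nat \<Rightarrow> nat \<Rightarrow> 'a::zero mat \<Rightarrow> 'a mat \<Rightarrow> 'a mat" where
  "diag2 N r H Z = four_block_mat H (0\<^sub>m N r) (0\<^sub>m r N) Z"

definition Qcal where "Qcal n m r i = diag2 (n*m) r (Qm n m i) (1\<^sub>m r)"
definition Rcal where "Rcal n m r A i = diag2 (n*m) r (Rm n m A i) (1\<^sub>m r)"
definition Tcal where "Tcal n m r A i = diag2 (n*m) r (Tm n m A i) (0\<^sub>m r r)"
definition Dcal where "Dcal n m r A E i = diag2 (n*m) r (Dm n m A i) (- cmat E)"

definition QcalB where "QcalB n m r i = sys_bt_diag n m r (Qm n m i) (1\<^sub>m r)"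
definition RcalB where "RcalB n m r A i = sys_bt_diag n m r (Rm n m A i) (1\<^sub>m r)"
definition TcalB where "TcalB n m r A i = sys_bt_diag n m r (Tm n m A i) (0\<^sub>m r r)"

end

theory Submission
  imports Defs
begin


lemma sum_split_nm: fixes g :: "nat \<Rightarrow> 'a::comm_monoid_add" shows "(\<Sum>k<n*m. g k) = (\<Sum>s<m. \<Sum>t<n. g (s*n+t))"
proof (induct m)
  case 0 then show ?case by simp
next
  case (Suc m)
  have "{..<n*Suc m} = {..<n*m} \<union> {n*m..<n*m+n}" by auto
  moreover have "(\<Sum>k\<in>{n*m..<n*m+n}. g k) = (\<Sum>t<n. g (m*n+t))"
    by (rule sum.reindex_bij_witness[of _ "\<lambda>t. m*n+t" "\<lambda>k. k - m*n"]) (auto simp: mult.commute)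
  moreover have "sum g ({..<n*m} \<union> {n*m..<n*m+n}) = sum g {..<n*m} + sum g {n*m..<n*m+n}"
    by (rule sum.union_disjoint) auto
  ultimately show ?case using Suc by (simp add: algebra_simps)
qed


definition gblk :: "nat \<Rightarrow> nat \<Rightarrow> nat \<Rightarrow> nat \<Rightarrow> (nat \<Rightarrow> nat \<Rightarrow> 'a mat) \<Rightarrow> 'a mat" where
  "gblk a b m1 m2 f = mat (a*m1) (b*m2) (\<lambda>(x,y). f (x div a + 1) (y div b + 1) $$ (x mod a, y mod b))"

lemma blk_gblk: "blk n m f = gblk n n m m f"
  by (simp add: blk_def gblk_def)

lemma gblk_dim[simp]: "dim_row (gblk a b m1 m2 f) = a*m1" "dim_col (gblk a b m1 m2 f) = b*m2"
  "gblk a b m1 m2 f \<in> carrier_mat (a*m1) (b*m2)"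
  by (auto simp: gblk_def)

lemma div_lt: "(a::nat) < n*m \<Longrightarrow> a div n < m"
  by (simp add: less_mult_imp_div_less mult.commute)

lemma mod_lt: "(a::nat) < n*m \<Longrightarrow> a mod n < n"
  by (cases "n = 0") auto

lemma gblk_index: "x < a*m1 \<Longrightarrow> y < b*m2 \<Longrightarrow> gblk a b m1 m2 f $$ (x,y) = f (x div a+1) (y div b+1) $$ (x mod a, y mod b)"
  by (simp add: gblk_def)

lemma gblk_eq: assumes "\<And>p q. 1 \<le> p \<Longrightarrow> p \<le> m1 \<Longrightarrow> 1 \<le> q \<Longrightarrow> q \<le> m2 \<Longrightarrow> f p q = g p q"
  shows "gblk a b m1 m2 f = gblk a b m1 m2 g"
proof (rule eq_matI)
  fix x y assume "x < dim_row (gblk a b m1 m2 g)" "y < dim_col (gblk a b m1 m2 g)"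
  then have ab: "x < a*m1" "y < b*m2" by auto
  then show "gblk a b m1 m2 f $$ (x,y) = gblk a b m1 m2 g $$ (x,y)" using ab assms div_lt[OF ab(1)] div_lt[OF ab(2)]
    by (simp add: gblk_index)
qed auto

lemma gblk_eq_entry: assumes "\<And>p q u v. 1 \<le> p \<Longrightarrow> p \<le> m1 \<Longrightarrow> 1 \<le> q \<Longrightarrow> q \<le> m2 \<Longrightarrow> u < a \<Longrightarrow> v < b \<Longrightarrow> f p q $$ (u,v) = g p q $$ (u,v)"
  shows "gblk a b m1 m2 f = gblk a b m1 m2 g"
proof (rule eq_matI)
  fix x y assume "x < dim_row (gblk a b m1 m2 g)" "y < dim_col (gblk a b m1 m2 g)"
  then have ab: "x < a*m1" "y < b*m2" by auto
  then show "gblk a b m1 m2 f $$ (x,y) = gblk a b m1 m2 g $$ (x,y)" using ab assms div_lt[OF ab(1)] div_lt[OF ab(2)]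
     mod_lt[OF ab(1)] mod_lt[OF ab(2)]
    by (simp add: gblk_index)
qed auto

definition bprod where
  "bprod f g c1 c2 = (\<lambda>p q. f p (c1 p q) * g (c1 p q) q + f p (c2 p q) * g (c2 p q) q)"

lemma gblk_mult2:
  fixes f g :: "nat \<Rightarrow> nat \<Rightarrow> 'a::comm_ring_1 mat"
  assumes cf: "\<And>p q. 1 \<le> p \<Longrightarrow> p \<le> m1 \<Longrightarrow> 1 \<le> q \<Longrightarrow> q \<le> m2 \<Longrightarrow> f p q \<in> carrier_mat a b"
  and cg: "\<And>p q. 1 \<le> p \<Longrightarrow> p \<le> m2 \<Longrightarrow> 1 \<le> q \<Longrightarrow> q \<le> m3 \<Longrightarrow> g p q \<in> carrier_mat b c"
  and cc: "\<And>p q. 1 \<le> p \<Longrightarrow> p \<le> m1 \<Longrightarrow> 1 \<le> q \<Longrightarrow> q \<le> m3 \<Longrightarrow>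
      1 \<le> c1 p q \<and> c1 p q \<le> m2 \<and> 1 \<le> c2 p q \<and> c2 p q \<le> m2 \<and> c1 p q \<noteq> c2 p q"
  and z: "\<And>p q s. 1 \<le> p \<Longrightarrow> p \<le> m1 \<Longrightarrow> 1 \<le> q \<Longrightarrow> q \<le> m3 \<Longrightarrow> 1 \<le> s \<Longrightarrow> s \<le> m2 \<Longrightarrow>
      s \<noteq> c1 p q \<Longrightarrow> s \<noteq> c2 p q \<Longrightarrow> f p s * g s q = 0\<^sub>m a c"
  shows "gblk a b m1 m2 f * gblk b c m2 m3 g = gblk a c m1 m3 (bprod f g c1 c2)"
proof (rule eq_matI)
  fix x0 y0 assume "x0 < dim_row (gblk a c m1 m3 (bprod f g c1 c2))"
    "y0 < dim_col (gblk a c m1 m3 (bprod f g c1 c2))"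
  then have ab: "x0 < a*m1" "y0 < c*m3" by auto
  define p where "p = x0 div a + 1"
  define q where "q = y0 div c + 1"
  define x where "x = x0 mod a"
  define y where "y = y0 mod c"
  have pq: "1 \<le> p" "p \<le> m1" "1 \<le> q" "q \<le> m3" "x < a" "y < c"
    using div_lt[OF ab(1)] div_lt[OF ab(2)] mod_lt[OF ab(1)] mod_lt[OF ab(2)]
    by (auto simp: p_def q_def x_def y_def)
  have "(gblk a b m1 m2 f * gblk b c m2 m3 g) $$ (x0,y0) = (\<Sum>k<b*m2. gblk a b m1 m2 f $$ (x0,k) * gblk b c m2 m3 g $$ (k,y0))"
    using ab by (simp add: scalar_prod_def lessThan_atLeast0)
  also have "\<dots> = (\<Sum>s<m2. \<Sum>t<b. f p (s+1) $$ (x,t) * g (s+1) q $$ (t,y))"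
    unfolding sum_split_nm
  proof (intro sum.cong refl)
    fix s t assume "s \<in> {..<m2}" "t \<in> {..<b}"
    then have st: "s < m2" "t < b" by auto
    have "s*b+t < s*b+b" using st by simp
    also have "s*b+b = (s+1)*b" by simp
    also have "\<dots> \<le> m2*b" using st by (intro mult_right_mono) auto
    finally have "s*b+t < b*m2" by (simp add: mult.commute)
    moreover have "(s*b+t) div b = s" "(s*b+t) mod b = t" using st by auto
    ultimately show "gblk a b m1 m2 f $$ (x0, s * b + t) * gblk b c m2 m3 g $$ (s * b + t, y0) = f p (s + 1) $$ (x, t) * g (s + 1) q $$ (t, y)"
      using ab by (simp add: gblk_index p_def q_def x_def y_def)
  qed
  also have "\<dots> = (\<Sum>s<m2. (f p (s+1) * g (s+1) q) $$ (x,y))"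
  proof (intro sum.cong refl)
    fix s assume "s \<in> {..<m2}"
    then have "f p (s+1) \<in> carrier_mat a b" "g (s+1) q \<in> carrier_mat b c" using cf cg pq by auto
    then show "(\<Sum>t<b. f p (s+1) $$ (x,t) * g (s+1) q $$ (t,y)) = (f p (s+1) * g (s+1) q) $$ (x,y)"
      using pq by (simp add: scalar_prod_def lessThan_atLeast0)
  qed
  also have "\<dots> = (\<Sum>s\<in>{1..m2}. (f p s * g s q) $$ (x,y))"
    by (rule sum.reindex_bij_witness[of _ "\<lambda>s. s - 1" "\<lambda>s. s + 1"]) auto
  also have "\<dots> = (f p (c1 p q) * g (c1 p q) q) $$ (x,y) + (f p (c2 p q) * g (c2 p q) q) $$ (x,y)"
  proof -
    let ?S = "{c1 p q, c2 p q}"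
    have sub: "?S \<subseteq> {1..m2}" using cc[OF pq(1-4)] by auto
    have "(\<Sum>s\<in>{1..m2}. (f p s * g s q) $$ (x,y)) = (\<Sum>s\<in>?S. (f p s * g s q) $$ (x,y))"
      by (rule sum.mono_neutral_right[OF _ sub]) (use z pq in auto)
    then show ?thesis using cc[OF pq(1-4)] by simp
  qed
  also have "\<dots> = (bprod f g c1 c2 p q) $$ (x,y)"
  proof -
    have "f p (c1 p q) \<in> carrier_mat a b" "f p (c2 p q) \<in> carrier_mat a b"
      "g (c1 p q) q \<in> carrier_mat b c" "g (c2 p q) q \<in> carrier_mat b c"
      using cc[OF pq(1-4)] cf[OF pq(1,2)] cg[OF _ _ pq(3,4)] by auto
    then show ?thesis using pq by (simp add: bprod_def)
  qed
  also have "\<dots> = gblk a c m1 m3 (bprod f g c1 c2) $$ (x0,y0)"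
    using ab by (simp add: gblk_index p_def q_def x_def y_def)
  finally show "(gblk a b m1 m2 f * gblk b c m2 m3 g) $$ (x0,y0) = gblk a c m1 m3 (bprod f g c1 c2) $$ (x0,y0)" .
qed auto

lemma bprod_carrier:
  assumes cf: "\<And>p q. 1 \<le> p \<Longrightarrow> p \<le> m1 \<Longrightarrow> 1 \<le> q \<Longrightarrow> q \<le> m2 \<Longrightarrow> f p q \<in> carrier_mat a b"
  and cg: "\<And>p q. 1 \<le> p \<Longrightarrow> p \<le> m2 \<Longrightarrow> 1 \<le> q \<Longrightarrow> q \<le> m3 \<Longrightarrow> g p q \<in> carrier_mat b c"
  and cc: "\<And>p q. 1 \<le> p \<Longrightarrow> p \<le> m1 \<Longrightarrow> 1 \<le> q \<Longrightarrow> q \<le> m3 \<Longrightarrow>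
      1 \<le> c1 p q \<and> c1 p q \<le> m2 \<and> 1 \<le> c2 p q \<and> c2 p q \<le> m2 \<and> c1 p q \<noteq> c2 p q"
  shows "\<And>p q. 1 \<le> p \<Longrightarrow> p \<le> m1 \<Longrightarrow> 1 \<le> q \<Longrightarrow> q \<le> m3 \<Longrightarrow> bprod f g c1 c2 p q \<in> carrier_mat a c"
proof -
  fix p q assume pq: "1 \<le> p" "p \<le> m1" "1 \<le> q" "q \<le> m3"
  show "bprod f g c1 c2 p q \<in> carrier_mat a c"
    using cc[OF pq] cf[OF pq(1,2)] cg[OF _ _ pq(3,4)] unfolding bprod_def
    by (intro add_carrier_mat mult_carrier_mat) auto
qed

lemma gblk_add: assumes "\<And>p q. 1 \<le> p \<Longrightarrow> p \<le> m1 \<Longrightarrow> 1 \<le> q \<Longrightarrow> q \<le> m2 \<Longrightarrow> g p q \<in> carrier_mat a b"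
  shows "gblk a b m1 m2 f + gblk a b m1 m2 g = gblk a b m1 m2 (\<lambda>p q. f p q + g p q)"
proof (rule eq_matI)
  fix x y assume "x < dim_row (gblk a b m1 m2 (\<lambda>p q. f p q + g p q))" "y < dim_col (gblk a b m1 m2 (\<lambda>p q. f p q + g p q))"
  then have ab: "x < a*m1" "y < b*m2" by auto
  show "(gblk a b m1 m2 f + gblk a b m1 m2 g) $$ (x,y) = gblk a b m1 m2 (\<lambda>p q. f p q + g p q) $$ (x,y)"
  proof -
    have "g (x div a + 1) (y div b + 1) \<in> carrier_mat a b" using assms div_lt[OF ab(1)] div_lt[OF ab(2)] by auto
    then show ?thesis using ab mod_lt[OF ab(1)] mod_lt[OF ab(2)] by (simp add: gblk_index)
  qed
qed auto

lemma gblk_smult: assumes "\<And>p q. 1 \<le> p \<Longrightarrow> p \<le> m1 \<Longrightarrow> 1 \<le> q \<Longrightarrow> q \<le> m2 \<Longrightarrow> f p q \<in> carrier_mat a b"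
  shows "k \<cdot>\<^sub>m gblk a b m1 m2 f = gblk a b m1 m2 (\<lambda>p q. k \<cdot>\<^sub>m f p q)"
proof (rule eq_matI)
  fix x y assume "x < dim_row (gblk a b m1 m2 (\<lambda>p q. k \<cdot>\<^sub>m f p q))" "y < dim_col (gblk a b m1 m2 (\<lambda>p q. k \<cdot>\<^sub>m f p q))"
  then have ab: "x < a*m1" "y < b*m2" by auto
  show "(k \<cdot>\<^sub>m gblk a b m1 m2 f) $$ (x,y) = gblk a b m1 m2 (\<lambda>p q. k \<cdot>\<^sub>m f p q) $$ (x,y)"
  proof -
    have "f (x div a + 1) (y div b + 1) \<in> carrier_mat a b" using assms div_lt[OF ab(1)] div_lt[OF ab(2)] by auto
    then show ?thesis using ab mod_lt[OF ab(1)] mod_lt[OF ab(2)] by (simp add: gblk_index)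
  qed
qed auto

lemma gblk_uminus: assumes "\<And>p q. 1 \<le> p \<Longrightarrow> p \<le> m1 \<Longrightarrow> 1 \<le> q \<Longrightarrow> q \<le> m2 \<Longrightarrow> f p q \<in> carrier_mat a b"
  shows "- gblk a b m1 m2 f = gblk a b m1 m2 (\<lambda>p q. - f p q)"
proof (rule eq_matI)
  fix x y assume "x < dim_row (gblk a b m1 m2 (\<lambda>p q. - f p q))" "y < dim_col (gblk a b m1 m2 (\<lambda>p q. - f p q))"
  then have ab: "x < a*m1" "y < b*m2" by auto
  show "(- gblk a b m1 m2 f) $$ (x,y) = gblk a b m1 m2 (\<lambda>p q. - f p q) $$ (x,y)"
  proof -
    have "f (x div a + 1) (y div b + 1) \<in> carrier_mat a b" using assms div_lt[OF ab(1)] div_lt[OF ab(2)] by auto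
    then show ?thesis using ab mod_lt[OF ab(1)] mod_lt[OF ab(2)] by (simp add: gblk_index)
  qed
qed auto

lemma cmat_gblk: assumes "\<And>p q. 1 \<le> p \<Longrightarrow> p \<le> m1 \<Longrightarrow> 1 \<le> q \<Longrightarrow> q \<le> m2 \<Longrightarrow> f p q \<in> carrier_mat a b"
  shows "cmat (gblk a b m1 m2 f) = gblk a b m1 m2 (\<lambda>p q. cmat (f p q))"
proof (rule eq_matI)
  fix x y assume "x < dim_row (gblk a b m1 m2 (\<lambda>p q. cmat (f p q)))" "y < dim_col (gblk a b m1 m2 (\<lambda>p q. cmat (f p q)))"
  then have ab: "x < a*m1" "y < b*m2" by auto
  show "cmat (gblk a b m1 m2 f) $$ (x,y) = gblk a b m1 m2 (\<lambda>p q. cmat (f p q)) $$ (x,y)"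
  proof -
    have "f (x div a + 1) (y div b + 1) \<in> carrier_mat a b" using assms div_lt[OF ab(1)] div_lt[OF ab(2)] by auto
    then show ?thesis using ab mod_lt[OF ab(1)] mod_lt[OF ab(2)] by (simp add: gblk_index cmat_def)
  qed
qed (auto simp: cmat_def)

lemma bt_gblk: assumes "0 < n"
  shows "block_transpose n m (gblk n n m m f) = gblk n n m m (\<lambda>p q. f q p)"
proof (rule eq_matI)
  fix x y assume "x < dim_row (gblk n n m m (\<lambda>p q. f q p))" "y < dim_col (gblk n n m m (\<lambda>p q. f q p))"
  then have ab: "x < n*m" "y < n*m" by auto
  have 1: "y div n * n + x mod n < n*m" 
  proof -
    have "y div n * n + x mod n < y div n * n + n" using assms by simp
    also have "\<dots> = (y div n + 1) * n" by simp
    also have "\<dots> \<le> m * n" using div_lt[OF ab(2)] by (intro mult_right_mono) auto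
    finally show ?thesis by (simp add: mult.commute)
  qed
  have 2: "x div n * n + y mod n < n*m" 
  proof -
    have "x div n * n + y mod n < x div n * n + n" using assms by simp
    also have "\<dots> = (x div n + 1) * n" by simp
    also have "\<dots> \<le> m * n" using div_lt[OF ab(1)] by (intro mult_right_mono) auto
    finally show ?thesis by (simp add: mult.commute)
  qed
  show "block_transpose n m (gblk n n m m f) $$ (x,y) = gblk n n m m (\<lambda>p q. f q p) $$ (x,y)"
    using ab 1 2 assms by (simp add: block_transpose_def gblk_index)
qed (auto simp: block_transpose_def)




lemma lam_mult: "lam * p = pCons 0 p"
  by (simp add: lam_def)

lemma horner_dim[simp]: "dim_row (horner n m A k) = n" "dim_col (horner n m A k) = n"
  "horner n m A k \<in> carrier_mat n n"
  by (auto simp: horner_def)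

lemma horner_Suc: assumes "Suc k \<le> m" "x < n" "y < n"
  shows "horner n m A (Suc k) $$ (x,y) = [:A (m - Suc k) $$ (x,y):] + lam * horner n m A k $$ (x,y)"
proof -
  have "horner n m A (Suc k) $$ (x,y) = (\<Sum>j=0..Suc k. monom (A (m - Suc k + j) $$ (x,y)) j)"
    using assms by (simp add: horner_def)
  also have "\<dots> = monom (A (m - Suc k) $$ (x,y)) 0 + (\<Sum>j=0..k. monom (A (m - Suc k + Suc j) $$ (x,y)) (Suc j))"
    by (subst sum.atLeast0_atMost_Suc_shift) simp
  also have "(\<Sum>j=0..k. monom (A (m - Suc k + Suc j) $$ (x,y)) (Suc j)) = lam * (\<Sum>j=0..k. monom (A (m - k + j) $$ (x,y)) j)"
    unfolding sum_distrib_left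
  proof (intro sum.cong refl)
    fix j assume "j \<in> {0..k}"
    have eq: "m - Suc k + Suc j = m - k + j" using assms by simp
    show "monom (A (m - Suc k + Suc j) $$ (x,y)) (Suc j) = lam * monom (A (m - k + j) $$ (x,y)) j"
      unfolding eq by (simp add: lam_mult monom_Suc)
  qed
  finally show ?thesis using assms by (simp add: horner_def monom_0)
qed

lemma cmat_index[simp]: "x < dim_row X \<Longrightarrow> y < dim_col X \<Longrightarrow> cmat X $$ (x,y) = [:X $$ (x,y):]"
  "dim_row (cmat X) = dim_row X" "dim_col (cmat X) = dim_col X"
  by (auto simp: cmat_def)

lemma cmat_carrier[simp]: "X \<in> carrier_mat a b \<Longrightarrow> cmat X \<in> carrier_mat a b"
  by (auto simp: cmat_def)

lemma cmat_one[simp]: "cmat (1\<^sub>m r) = 1\<^sub>m r"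
  by (rule eq_matI) (auto simp: cmat_def)

lemma cmat_zero[simp]: "cmat (0\<^sub>m a b) = 0\<^sub>m a b"
  by (rule eq_matI) (auto simp: cmat_def)

lemma cmat_uminus: "cmat (- X) = - cmat X"
  by (rule eq_matI) (auto simp: cmat_def)

lemma lam1_mult[simp]: "dim_row X = n \<Longrightarrow> (k \<cdot>\<^sub>m 1\<^sub>m n) * X = (k::'a::comm_ring_1) \<cdot>\<^sub>m X"
proof -
  assume "dim_row X = n"
  then have X: "X \<in> carrier_mat n (dim_col X)" by auto
  show ?thesis using mult_smult_assoc_mat[OF one_carrier_mat X, of k] X by simp
qed

lemma mult_lam1[simp]: "dim_col X = n \<Longrightarrow> X * (k \<cdot>\<^sub>m 1\<^sub>m n) = (k::'a::comm_ring_1) \<cdot>\<^sub>m X"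
proof -
  assume "dim_col X = n"
  then have X: "X \<in> carrier_mat (dim_row X) n" by auto
  show ?thesis using mult_smult_distrib[OF X one_carrier_mat, of k] X by simp
qed

lemma smult_zero_mat'[simp]: "k \<cdot>\<^sub>m 0\<^sub>m a b = (0\<^sub>m a b :: 'a::comm_ring_1 mat)"
  by (rule eq_matI) auto

lemma zero_add_zero_mat[simp]: "0\<^sub>m a b + 0\<^sub>m a b = (0\<^sub>m a b :: 'a::comm_ring_1 mat)"
  by (rule eq_matI) auto

lemma bprod_carrier_all:
  assumes "\<And>p q. f p q \<in> carrier_mat a b" "\<And>p q. g p q \<in> carrier_mat b c"
  shows "bprod f g c1 c2 p q \<in> carrier_mat a c"
  unfolding bprod_def using assms by (intro add_carrier_mat mult_carrier_mat) auto

lemma bprod_dims[simp]: "dim_row (bprod f g c1 c2 p q) = dim_row (f p (c2 p q))"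
  "dim_col (bprod f g c1 c2 p q) = dim_col (g (c2 p q) q)"
  by (simp_all add: bprod_def)

lemma diag2_mult: fixes X :: "'a::comm_ring_1 mat" assumes "X \<in> carrier_mat N N" "Y \<in> carrier_mat N N" "Z \<in> carrier_mat r r" "W \<in> carrier_mat r r"
  shows "diag2 N r X Z * diag2 N r Y W = diag2 N r (X*Y) (Z*W)"
  unfolding diag2_def using assms by (subst mult_four_block_mat) auto

lemma diag2_smult: fixes X :: "'a::comm_ring_1 mat" assumes "X \<in> carrier_mat N N" "Z \<in> carrier_mat r r"
  shows "k \<cdot>\<^sub>m diag2 N r X Z = diag2 N r (k \<cdot>\<^sub>m X) (k \<cdot>\<^sub>m Z)"
  unfolding diag2_def using assms by (subst smult_four_block_mat) auto

lemma diag2_add: fixes X :: "'a::comm_ring_1 mat" assumes "X \<in> carrier_mat N N" "Y \<in> carrier_mat N N" "Z \<in> carrier_mat r r" "W \<in> carrier_mat r r"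
  shows "diag2 N r X Z + diag2 N r Y W = diag2 N r (X+Y) (Z+W)"
  unfolding diag2_def using assms by (subst add_four_block_mat) auto




definition qf :: "nat \<Rightarrow> nat \<Rightarrow> nat \<Rightarrow> nat \<Rightarrow> complex poly mat" where
  "qf n i = (\<lambda>p q. if p = q then 1\<^sub>m n
      else if p = i \<and> q = i + 1 then lam \<cdot>\<^sub>m 1\<^sub>m n else 0\<^sub>m n n)"

definition rf where
  "rf n m A i = (\<lambda>p q.
      if p = i \<and> q = i then 0\<^sub>m n n
      else if p = i \<and> q = i + 1 then 1\<^sub>m n
      else if p = i + 1 \<and> q = i then 1\<^sub>m n
      else if p = i + 1 \<and> q = i + 1 then horner n m A i
      else if p = q then 1\<^sub>m n else 0\<^sub>m n n)"

definition tf where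
  "tf n m A i = (\<lambda>p q.
      if p = i \<and> q = i + 1 then lam \<cdot>\<^sub>m horner n m A (i - 1)
      else if p = i + 1 \<and> q = i then lam \<cdot>\<^sub>m 1\<^sub>m n
      else if p = i + 1 \<and> q = i + 1 then (lam ^ 2) \<cdot>\<^sub>m horner n m A (i - 1)
      else 0\<^sub>m n n)"

definition df where
  "df n m A i = (\<lambda>p q.
      if p \<noteq> q then 0\<^sub>m n n
      else if p < i then 0\<^sub>m n n
      else if p = i then horner n m A (i - 1)
      else 1\<^sub>m n)"

lemma qf_carrier[simp]: "qf n i p q \<in> carrier_mat n n" by (simp add: qf_def)
lemma rf_carrier[simp]: "rf n m A i p q \<in> carrier_mat n n" by (simp add: rf_def)
lemma tf_carrier[simp]: "tf n m A i p q \<in> carrier_mat n n" by (simp add: tf_def)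
lemma df_carrier[simp]: "df n m A i p q \<in> carrier_mat n n" by (simp add: df_def)

lemma blk_dims[simp]:
  "dim_row (qf n i p q) = n" "dim_col (qf n i p q) = n"
  "dim_row (rf n m A i p q) = n" "dim_col (rf n m A i p q) = n"
  "dim_row (tf n m A i p q) = n" "dim_col (tf n m A i p q) = n"
  "dim_row (df n m A i p q) = n" "dim_col (df n m A i p q) = n"
  by (rule carrier_matD, rule qf_carrier rf_carrier tf_carrier df_carrier)+

lemma qf_zero: "p \<noteq> q \<Longrightarrow> \<not> (p = i \<and> q = i+1) \<Longrightarrow> qf n i p q = 0\<^sub>m n n"
  by (auto simp: qf_def)
lemma rf_zero: "p \<noteq> q \<Longrightarrow> \<not> (p = i \<and> q = i+1) \<Longrightarrow> \<not> (p = i+1 \<and> q = i) \<Longrightarrow> rf n m A i p q = 0\<^sub>m n n"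
  by (auto simp: rf_def)
lemma rf_zero2: "rf n m A i i i = 0\<^sub>m n n"
  by (auto simp: rf_def)
lemma tf_zero: "\<not> (p = i \<and> q = i+1) \<Longrightarrow> \<not> (p = i+1 \<and> q = i) \<Longrightarrow> \<not> (p = i+1 \<and> q = i+1) \<Longrightarrow> tf n m A i p q = 0\<^sub>m n n"
  by (auto simp: tf_def)

lemma Qm_g: "Qm n m i = gblk n n m m (qf n i)" unfolding Qm_def qf_def blk_gblk by (rule refl)
lemma Rm_g: "Rm n m A i = gblk n n m m (rf n m A i)" unfolding Rm_def rf_def blk_gblk by (rule refl)
lemma Tm_g: "Tm n m A i = gblk n n m m (tf n m A i)" unfolding Tm_def tf_def blk_gblk by (rule refl)
lemma Dm_g: "Dm n m A i = gblk n n m m (df n m A i)" unfolding Dm_def df_def blk_gblk by (rule refl)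




definition ff where
  "ff n m A k = (\<lambda>p q.
        if p = m - k \<and> q = m - k then - cmat (A k)
        else if p = m - k \<and> q = m - k + 1 then 1\<^sub>m n
        else if p = m - k + 1 \<and> q = m - k then 1\<^sub>m n
        else if p = m - k + 1 \<and> q = m - k + 1 then 0\<^sub>m n n
        else if p = q then 1\<^sub>m n else 0\<^sub>m n n)"

definition ffp :: "nat \<Rightarrow> complex mat \<Rightarrow> nat \<Rightarrow> nat \<Rightarrow> nat \<Rightarrow> complex poly mat" where
  "ffp n X t = (\<lambda>p q.
        if p = t \<and> q = t then - cmat X
        else if p = t \<and> q = t + 1 then 1\<^sub>m n
        else if p = t + 1 \<and> q = t then 1\<^sub>m n
        else if p = t + 1 \<and> q = t + 1 then 0\<^sub>m n n
        else if p = q then 1\<^sub>m n else 0\<^sub>m n n)"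

lemma ff_ffp: "ff n m A k = ffp n (A k) (m - k)"
  unfolding ff_def ffp_def ..

lemma ffp_carrier[simp]: "X \<in> carrier_mat n n \<Longrightarrow> ffp n X t p q \<in> carrier_mat n n"
  by (auto simp: ffp_def)
lemma ffp_dims[simp]: "X \<in> carrier_mat n n \<Longrightarrow> dim_row (ffp n X t p q) = n"
   "X \<in> carrier_mat n n \<Longrightarrow> dim_col (ffp n X t p q) = n"
  by (rule carrier_matD, erule ffp_carrier)+

lemma ffp_zero: "p \<noteq> q \<Longrightarrow> \<not> (p = t \<and> q = t+1) \<Longrightarrow> \<not> (p = t+1 \<and> q = t) \<Longrightarrow> ffp n X t p q = 0\<^sub>m n n"
  by (auto simp: ffp_def)
lemma ffp_one: "p \<noteq> t \<Longrightarrow> p \<noteq> t+1 \<Longrightarrow> ffp n X t p p = 1\<^sub>m n"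
  by (auto simp: ffp_def)

definition f0 where
  "f0 n m A = (\<lambda>p q. if p \<noteq> q then 0\<^sub>m n n else if p = m then - cmat (A 0) else 1\<^sub>m n)"

definition ecf where "ecf n m r C = (\<lambda>p q::nat. if p = m then - cmat C else 0\<^sub>m n r)"
definition erf where "erf n m r B = (\<lambda>p q. if q = m then - cmat B else 0\<^sub>m r n)"

lemma ff_carrier[simp]: "A k \<in> carrier_mat n n \<Longrightarrow> ff n m A k p q \<in> carrier_mat n n"
  by (simp add: ff_def)
lemma f0_carrier[simp]: "A 0 \<in> carrier_mat n n \<Longrightarrow> f0 n m A p q \<in> carrier_mat n n"
  by (simp add: f0_def)
lemma ecf_carrier[simp]: "C \<in> carrier_mat n r \<Longrightarrow> ecf n m r C p q \<in> carrier_mat n r"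
  by (simp add: ecf_def)
lemma erf_carrier[simp]: "B \<in> carrier_mat r n \<Longrightarrow> erf n m r B p q \<in> carrier_mat r n"
  by (simp add: erf_def)

lemma ff_dims[simp]: "A k \<in> carrier_mat n n \<Longrightarrow> dim_row (ff n m A k p q) = n"
   "A k \<in> carrier_mat n n \<Longrightarrow> dim_col (ff n m A k p q) = n"
  by (rule carrier_matD, erule ff_carrier)+
lemma f0_dims[simp]: "A 0 \<in> carrier_mat n n \<Longrightarrow> dim_row (f0 n m A p q) = n"
   "A 0 \<in> carrier_mat n n \<Longrightarrow> dim_col (f0 n m A p q) = n"
  by (rule carrier_matD, erule f0_carrier)+
lemma ecf_dims[simp]: "C \<in> carrier_mat n r \<Longrightarrow> dim_row (ecf n m r C p q) = n"
   "C \<in> carrier_mat n r \<Longrightarrow> dim_col (ecf n m r C p q) = r"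
  by (rule carrier_matD, erule ecf_carrier)+
lemma erf_dims[simp]: "B \<in> carrier_mat r n \<Longrightarrow> dim_row (erf n m r B p q) = r"
   "B \<in> carrier_mat r n \<Longrightarrow> dim_col (erf n m r B p q) = n"
  by (rule carrier_matD, erule erf_carrier)+

lemma cmat_if: "cmat (if c then X else Y) = (if c then cmat X else cmat Y)" by simp

lemma fiedler_mid: assumes "0 < k" "k < m" "A k \<in> carrier_mat n n"
  shows "cmat (fiedler n m A k) = gblk n n m m (ff n m A k)"
proof -
  have "cmat (fiedler n m A k) = cmat (gblk n n m m (\<lambda>p q.
        if p = m - k \<and> q = m - k then - A k
        else if p = m - k \<and> q = m - k + 1 then 1\<^sub>m n
        else if p = m - k + 1 \<and> q = m - k then 1\<^sub>m n
        else if p = m - k + 1 \<and> q = m - k + 1 then 0\<^sub>m n n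
        else if p = q then 1\<^sub>m n else 0\<^sub>m n n))"
    using assms unfolding fiedler_def blk_gblk by simp
  also have "\<dots> = gblk n n m m (ff n m A k)"
    by (subst cmat_gblk) (use assms in \<open>auto simp: ff_def cmat_uminus intro!: gblk_eq\<close>)
  finally show ?thesis .
qed

lemma fiedler_0: assumes "0 < m" "A 0 \<in> carrier_mat n n"
  shows "cmat (fiedler n m A 0) = gblk n n m m (f0 n m A)"
proof -
  have "cmat (fiedler n m A 0) = cmat (gblk n n m m (\<lambda>p q. if p \<noteq> q then 0\<^sub>m n n
                               else if p = m then - A 0 else 1\<^sub>m n))"
    using assms unfolding fiedler_def blk_gblk by simp
  also have "\<dots> = gblk n n m m (f0 n m A)"
    by (subst cmat_gblk) (use assms in \<open>auto simp: f0_def cmat_uminus intro!: gblk_eq\<close>)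
  finally show ?thesis .
qed

lemma em_col_g: assumes "C \<in> carrier_mat n r"
  shows "cmat (- em_col n m r C) = gblk n r m 1 (ecf n m r C)"
proof (rule eq_matI)
  fix x y assume "x < dim_row (gblk n r m 1 (ecf n m r C))" "y < dim_col (gblk n r m 1 (ecf n m r C))"
  then have xy: "x < n*m" "y < r" by auto
  then show "cmat (- em_col n m r C) $$ (x,y) = gblk n r m 1 (ecf n m r C) $$ (x,y)"
    using assms mod_lt[OF xy(1)] by (simp add: gblk_index em_col_def ecf_def)
qed (auto simp: em_col_def)

lemma em_row_g: assumes "B \<in> carrier_mat r n"
  shows "cmat (- em_row n m r B) = gblk r n 1 m (erf n m r B)"
proof (rule eq_matI)
  fix x y assume "x < dim_row (gblk r n 1 m (erf n m r B))" "y < dim_col (gblk r n 1 m (erf n m r B))"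
  then have xy: "x < r" "y < n*m" by auto
  then show "cmat (- em_row n m r B) $$ (x,y) = gblk r n 1 m (erf n m r B) $$ (x,y)"
    using assms mod_lt[OF xy(2)] by (simp add: gblk_index em_row_def erf_def)
qed (auto simp: em_row_def)

lemma MM_mid: assumes "0 < k" "k < m" "A k \<in> carrier_mat n n"
  shows "sys_fiedler n m r A Amat E B C k = diag2 (n*m) r (gblk n n m m (ff n m A k)) (1\<^sub>m r)"
proof -
  have "sys_fiedler n m r A Amat E B C k = cmat (four_block_mat (fiedler n m A k) (0\<^sub>m (n*m) r) (0\<^sub>m r (n*m)) (1\<^sub>m r))"
    using assms by (simp add: sys_fiedler_def)
  also have "\<dots> = four_block_mat (cmat (fiedler n m A k)) (cmat (0\<^sub>m (n*m) r)) (cmat (0\<^sub>m r (n*m))) (cmat (1\<^sub>m r))"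
  proof -
    have c1: "fiedler n m A k \<in> carrier_mat (n*m) (n*m)" unfolding fiedler_def blk_gblk by simp
    show ?thesis unfolding cmat_def by (rule map_four_block_mat[OF c1 zero_carrier_mat zero_carrier_mat one_carrier_mat])
  qed
  finally show ?thesis using assms by (simp add: fiedler_mid diag2_def)
qed

lemma MM_0: assumes "0 < m" "A 0 \<in> carrier_mat n n" "C \<in> carrier_mat n r" "B \<in> carrier_mat r n"
   "Amat \<in> carrier_mat r r"
  shows "sys_fiedler n m r A Amat E B C 0 = four_block_mat (gblk n n m m (f0 n m A))
     (gblk n r m 1 (ecf n m r C)) (gblk r n 1 m (erf n m r B)) (- cmat Amat)"
proof -
  have "sys_fiedler n m r A Amat E B C 0 = cmat (four_block_mat (fiedler n m A 0) (- em_col n m r C) (- em_row n m r B) (- Amat))"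
    using assms by (simp add: sys_fiedler_def)
  also have "\<dots> = four_block_mat (cmat (fiedler n m A 0)) (cmat (- em_col n m r C)) (cmat (- em_row n m r B)) (cmat (- Amat))"
  proof -
    have c1: "fiedler n m A 0 \<in> carrier_mat (n*m) (n*m)" unfolding fiedler_def blk_gblk by simp
    have c2: "- em_col n m r C \<in> carrier_mat (n*m) r" by (simp add: em_col_def)
    have c3: "- em_row n m r B \<in> carrier_mat r (n*m)" by (simp add: em_row_def)
    have c4: "- Amat \<in> carrier_mat r r" using assms by simp
    show ?thesis unfolding cmat_def by (rule map_four_block_mat[OF c1 c2 c3 c4])
  qed
  finally show ?thesis using assms by (simp add: fiedler_0 em_col_g em_row_g cmat_uminus[of Amat])
qed

lemma fb_diag2: fixes A :: "'a::comm_ring_1 mat"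
  assumes "A \<in> carrier_mat N N" "B \<in> carrier_mat N r" "C \<in> carrier_mat r N" "D \<in> carrier_mat r r"
    "X \<in> carrier_mat N N" "Z \<in> carrier_mat r r"
  shows "four_block_mat A B C D * diag2 N r X Z = four_block_mat (A*X) (B*Z) (C*X) (D*Z)"
  unfolding diag2_def using assms by (subst mult_four_block_mat) auto

lemma diag2_fb: fixes A :: "'a::comm_ring_1 mat"
  assumes "A \<in> carrier_mat N N" "B \<in> carrier_mat N r" "C \<in> carrier_mat r N" "D \<in> carrier_mat r r"
    "X \<in> carrier_mat N N" "Z \<in> carrier_mat r r"
  shows "diag2 N r X Z * four_block_mat A B C D = four_block_mat (X*A) (X*B) (Z*C) (Z*D)"
  unfolding diag2_def using assms by (subst mult_four_block_mat) auto

lemma fb_add_diag2: fixes A :: "'a::comm_ring_1 mat"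
  assumes "A \<in> carrier_mat N N" "B \<in> carrier_mat N r" "C \<in> carrier_mat r N" "D \<in> carrier_mat r r"
    "X \<in> carrier_mat N N" "Z \<in> carrier_mat r r"
  shows "four_block_mat A B C D + diag2 N r X Z = four_block_mat (A+X) B C (D+Z)"
  unfolding diag2_def using assms by (subst add_four_block_mat) auto




lemma a1_nm:
  assumes n: "0 < n" and i: "1 \<le> i" "i \<le> m - 1"
  shows "block_transpose n m (Qm n m i) * (lam \<cdot>\<^sub>m Dm n m A i) * Rm n m A i
     = lam \<cdot>\<^sub>m Dm n m A (i+1) + Tm n m A i"
proof -
  have m: "2 \<le> m" using i by auto
  obtain i0 where i0: "i = Suc i0" using i by (cases i) auto
  let ?QB = "\<lambda>p q. qf n i q p"
  let ?LD = "\<lambda>p q. lam \<cdot>\<^sub>m df n m A i p q"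
  let ?c1 = "\<lambda>p q::nat. p"
  let ?c2 = "\<lambda>p q::nat. if p = i+1 then i else if p = 1 then 2 else (1::nat)"
  let ?d1 = "\<lambda>p q::nat. if q = i \<or> q = i+1 then i+1 else q"
  let ?d2 = "\<lambda>p q::nat. if q = i \<or> q = i+1 then i else if q = 1 then 2 else (1::nat)"
  have e1: "gblk n n m m ?QB * gblk n n m m ?LD = gblk n n m m (bprod ?QB ?LD ?c1 ?c2)"
    by (rule gblk_mult2) (use i m in \<open>auto simp: qf_def\<close>)
  have e2: "gblk n n m m (bprod ?QB ?LD ?c1 ?c2) * gblk n n m m (rf n m A i)
     = gblk n n m m (bprod (bprod ?QB ?LD ?c1 ?c2) (rf n m A i) ?d1 ?d2)"
    by (rule gblk_mult2) (use i m bprod_carrier_all[of ?QB n n ?LD n] in \<open>auto simp: rf_def\<close>)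
  have lhs: "block_transpose n m (Qm n m i) * (lam \<cdot>\<^sub>m Dm n m A i) * Rm n m A i
     = gblk n n m m (bprod (bprod ?QB ?LD ?c1 ?c2) (rf n m A i) ?d1 ?d2)"
    unfolding Qm_g Dm_g Rm_g bt_gblk[OF n] using e1 e2 by (simp add: gblk_smult)
  have rhs: "lam \<cdot>\<^sub>m Dm n m A (i+1) + Tm n m A i = gblk n n m m (\<lambda>p q. lam \<cdot>\<^sub>m df n m A (i+1) p q + tf n m A i p q)"
    unfolding Dm_g Tm_g by (simp add: gblk_smult gblk_add)
  show ?thesis unfolding lhs rhs
  proof (rule gblk_eq_entry)
    fix p q u v assume pq: "1 \<le> p" "p \<le> m" "1 \<le> q" "q \<le> m" "u < n" "v < n"
    have "p < i \<or> p = i \<or> p = Suc i \<or> Suc i < p" "q < i \<or> q = i \<or> q = Suc i \<or> Suc i < q" by arith+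
    then show "bprod (bprod ?QB ?LD ?c1 ?c2) (rf n m A i) ?d1 ?d2 p q $$ (u,v) =
      (lam \<cdot>\<^sub>m df n m A (i+1) p q + tf n m A i p q) $$ (u,v)"
      using pq i m unfolding bprod_def
      apply (elim disjE)
      apply (simp_all add: qf_def rf_def df_def tf_def power2_eq_square)
      done
  qed
qed



lemma uminus_zero_mat'[simp]: "- 0\<^sub>m a b = (0\<^sub>m a b :: 'a::group_add mat)"
  by (rule eq_matI) auto

lemma horner_rec_entry: "1 \<le> k \<Longrightarrow> k \<le> m \<Longrightarrow> x < n \<Longrightarrow> y < n \<Longrightarrow>
  horner n m A k $$ (x,y) = [:A (m-k) $$ (x,y):] + lam * horner n m A (k - 1) $$ (x,y)"
  using horner_Suc[of "k - 1" m x n y A] by simp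

lemma a2_nm:
  assumes n: "0 < n" and i: "1 \<le> i" "i + 1 \<le> m" and hA: "\<And>j. j \<le> m \<Longrightarrow> A j \<in> carrier_mat n n"
  shows "block_transpose n m (Qm n m i) * (gblk n n m m (ff n m A (m - (i+1))) * gblk n n m m (ff n m A (m - i))) * Rm n m A i
     = gblk n n m m (ff n m A (m - (i+1))) + Tm n m A i"
proof -
  obtain i0 where i0: "i = Suc i0" using i by (cases i) auto
  have ar: "m - (m - (i+1)) = i+1" "m - (m - i) = i" using i by auto
  have cA: "A (m - (i+1)) \<in> carrier_mat n n" "A (m - i) \<in> carrier_mat n n" "A 0 \<in> carrier_mat n n" using hA by auto
  let ?F1 = "ffp n (A (m - (i+1))) (i+1)"
  let ?F2 = "ffp n (A (m - i)) i"
  let ?QB = "\<lambda>p q. qf n i q p"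
  let ?a1 = "\<lambda>p q::nat. if p = i+2 then i+1 else p"
  let ?a2 = "\<lambda>p q::nat. if (p = i+1 \<or> p = i+2) \<and> i + 2 \<le> m then i+2 else if p = i then i+1 else i"
  let ?c1 = "\<lambda>p q::nat. p"
  let ?c2 = "\<lambda>p q::nat. if p = i then i+1 else i"
  let ?d1 = "\<lambda>p q::nat. if q = i \<or> q = i+1 then i+1 else q"
  let ?d2 = "\<lambda>p q::nat. i"
  define Z where "Z = (\<lambda>p q. if p = i then (if q = i then - cmat (A (m - i)) else if q = i+1 then 1\<^sub>m n else 0\<^sub>m n n)
     else if p = i+1 then (if q = i then - cmat (A (m - (i+1))) else if q = i+2 then 1\<^sub>m n else 0\<^sub>m n n)
     else if p = i+2 then (if q = i then 1\<^sub>m n else 0\<^sub>m n n)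
     else if p = q then 1\<^sub>m n else 0\<^sub>m n n)"
  define W where "W = (\<lambda>p q. if p = i+1 then (if q = i then - cmat (A (m - (i+1))) + lam \<cdot>\<^sub>m (- cmat (A (m - i)))
          else if q = i+1 then lam \<cdot>\<^sub>m 1\<^sub>m n else if q = i+2 then 1\<^sub>m n else 0\<^sub>m n n) else Z p q)"
  have cZ: "\<And>p q. Z p q \<in> carrier_mat n n" using cA by (simp add: Z_def)
  have cW: "\<And>p q. W p q \<in> carrier_mat n n" using cZ cA by (simp add: W_def)
  have dZ: "\<And>p q. dim_row (Z p q) = n" "\<And>p q. dim_col (Z p q) = n" using cZ by auto
  have dW: "\<And>p q. dim_row (W p q) = n" "\<And>p q. dim_col (W p q) = n" using cW by auto
  have e0: "gblk n n m m ?F1 * gblk n n m m ?F2 = gblk n n m m Z"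
  proof -
    have "gblk n n m m ?F1 * gblk n n m m ?F2 = gblk n n m m (bprod ?F1 ?F2 ?a1 ?a2)"
      by (rule gblk_mult2) (use i cA in \<open>auto simp: ffp_zero split: if_splits\<close>)
    also have "\<dots> = gblk n n m m Z"
    proof (rule gblk_eq)
      fix p q assume pq: "1 \<le> p" "p \<le> m" "1 \<le> q" "q \<le> m"
      have "p < i \<or> p = i \<or> p = Suc i \<or> p = Suc (Suc i) \<or> Suc (Suc i) < p" by arith
      then show "bprod ?F1 ?F2 ?a1 ?a2 p q = Z p q"
        using pq i cA unfolding bprod_def Z_def
        by (elim disjE) (simp_all add: ffp_def)
    qed
    finally show ?thesis .
  qed
  have e1: "gblk n n m m ?QB * gblk n n m m Z = gblk n n m m W"
  proof -
    have "gblk n n m m ?QB * gblk n n m m Z = gblk n n m m (bprod ?QB Z ?c1 ?c2)"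
      by (rule gblk_mult2) (use i cZ dZ in \<open>auto simp: qf_zero split: if_splits\<close>)
    also have "\<dots> = gblk n n m m W"
    proof (rule gblk_eq)
      fix p q assume pq: "1 \<le> p" "p \<le> m" "1 \<le> q" "q \<le> m"
      have "p = Suc i \<or> p \<noteq> Suc i" by arith
      then show "bprod ?QB Z ?c1 ?c2 p q = W p q"
        using pq i cZ cA unfolding bprod_def W_def
        by (elim disjE) (simp_all add: qf_def Z_def)
    qed
    finally show ?thesis .
  qed
  have e2: "gblk n n m m W * gblk n n m m (rf n m A i)
     = gblk n n m m (bprod W (rf n m A i) ?d1 ?d2)"
    by (rule gblk_mult2) (use i cW dW in \<open>auto simp: rf_zero rf_zero2 split: if_splits\<close>)
  have lhs: "block_transpose n m (Qm n m i) * (gblk n n m m ?F1 * gblk n n m m ?F2) * Rm n m A i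
     = gblk n n m m (bprod W (rf n m A i) ?d1 ?d2)"
    unfolding Qm_g Rm_g bt_gblk[OF n] e0 e1 e2 ..
  have rhs: "gblk n n m m ?F1 + Tm n m A i = gblk n n m m (\<lambda>p q. ?F1 p q + tf n m A i p q)"
    unfolding Tm_g using cA by (simp add: gblk_add)
  show ?thesis unfolding ff_ffp ar lhs rhs
  proof (rule gblk_eq)
    fix p q assume pq: "1 \<le> p" "p \<le> m" "1 \<le> q" "q \<le> m"
    have "p < i \<or> p = i \<or> p = Suc i \<or> p = Suc (Suc i) \<or> Suc (Suc i) < p"
      "q = i \<or> q = Suc i \<or> (q \<noteq> i \<and> q \<noteq> Suc i)" by arith+
    then show "bprod W (rf n m A i) ?d1 ?d2 p q = ?F1 p q + tf n m A i p q"
      using pq i cA unfolding bprod_def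
      apply (elim disjE)
      apply (simp_all add: W_def Z_def rf_def ffp_def tf_def)
      apply (auto intro!: eq_matI simp: horner_rec_entry[of i] power2_eq_square algebra_simps)
      done
  qed
qed





lemma b1_nm:
  assumes n: "0 < n" and i: "1 \<le> i" "i \<le> m - 1"
  shows "block_transpose n m (Rm n m A i) * (lam \<cdot>\<^sub>m Dm n m A i) * Qm n m i
     = lam \<cdot>\<^sub>m Dm n m A (i+1) + block_transpose n m (Tm n m A i)"
proof -
  let ?RB = "\<lambda>p q. rf n m A i q p"
  let ?LD = "\<lambda>p q. lam \<cdot>\<^sub>m df n m A i p q"
  let ?c1 = "\<lambda>p q::nat. if p = i \<or> p = i+1 then i+1 else p"
  let ?c2 = "\<lambda>p q::nat. i"
  let ?d1 = "\<lambda>p q::nat. q"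
  let ?d2 = "\<lambda>p q::nat. if q = i then i+1 else i"
  have e1: "gblk n n m m ?RB * gblk n n m m ?LD = gblk n n m m (bprod ?RB ?LD ?c1 ?c2)"
    by (rule gblk_mult2) (use i in \<open>auto simp: rf_zero split: if_splits\<close>)
  have cY: "\<And>p q. bprod ?RB ?LD ?c1 ?c2 p q \<in> carrier_mat n n" by (rule bprod_carrier_all) auto
  have dY: "\<And>p q. dim_row (bprod ?RB ?LD ?c1 ?c2 p q) = n" "\<And>p q. dim_col (bprod ?RB ?LD ?c1 ?c2 p q) = n"
    using cY by auto
  have e2: "gblk n n m m (bprod ?RB ?LD ?c1 ?c2) * gblk n n m m (qf n i)
     = gblk n n m m (bprod (bprod ?RB ?LD ?c1 ?c2) (qf n i) ?d1 ?d2)"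
    by (rule gblk_mult2) (use i cY dY in \<open>auto simp: qf_zero split: if_splits\<close>)
  have lhs: "block_transpose n m (Rm n m A i) * (lam \<cdot>\<^sub>m Dm n m A i) * Qm n m i
     = gblk n n m m (bprod (bprod ?RB ?LD ?c1 ?c2) (qf n i) ?d1 ?d2)"
    unfolding Qm_g Dm_g Rm_g bt_gblk[OF n] using e1 e2 by (simp add: gblk_smult)
  have rhs: "lam \<cdot>\<^sub>m Dm n m A (i+1) + block_transpose n m (Tm n m A i) = gblk n n m m (\<lambda>p q. lam \<cdot>\<^sub>m df n m A (i+1) p q + tf n m A i q p)"
    unfolding Dm_g Tm_g bt_gblk[OF n] by (simp add: gblk_smult gblk_add)
  show ?thesis unfolding lhs rhs
  proof (rule gblk_eq)
    fix p q assume pq: "1 \<le> p" "p \<le> m" "1 \<le> q" "q \<le> m"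
    have "p < i \<or> p = i \<or> p = Suc i \<or> Suc i < p" "q < i \<or> q = i \<or> q = Suc i \<or> Suc i < q" by arith+
    then show "bprod (bprod ?RB ?LD ?c1 ?c2) (qf n i) ?d1 ?d2 p q =
      lam \<cdot>\<^sub>m df n m A (i+1) p q + tf n m A i q p"
      using pq i unfolding bprod_def
      apply (elim disjE)
      apply (simp_all add: qf_def rf_def df_def tf_def)
      apply (auto intro!: eq_matI simp: power2_eq_square algebra_simps)
      done
  qed
qed


lemma b2_nm:
  assumes n: "0 < n" and i: "1 \<le> i" "i + 1 \<le> m" and hA: "\<And>j. j \<le> m \<Longrightarrow> A j \<in> carrier_mat n n"
  shows "block_transpose n m (Rm n m A i) * (gblk n n m m (ff n m A (m - i)) * gblk n n m m (ff n m A (m - (i+1)))) * Qm n m i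
     = gblk n n m m (ff n m A (m - (i+1))) + block_transpose n m (Tm n m A i)"
proof -
  have ar: "m - (m - (i+1)) = i+1" "m - (m - i) = i" using i by auto
  have cA: "A (m - (i+1)) \<in> carrier_mat n n" "A (m - i) \<in> carrier_mat n n" "A 0 \<in> carrier_mat n n" using hA by auto
  let ?F1 = "ffp n (A (m - (i+1))) (i+1)"
  let ?F2 = "ffp n (A (m - i)) i"
  let ?RB = "\<lambda>p q. rf n m A i q p"
  let ?a1 = "\<lambda>p q::nat. if p = i+1 then i else p"
  let ?a2 = "\<lambda>p q::nat. if p = i \<or> p = i+1 then i+1 else i"
  let ?c1 = "\<lambda>p q::nat. if p = i \<or> p = i+1 then i+1 else p"
  let ?c2 = "\<lambda>p q::nat. i"
  let ?d1 = "\<lambda>p q::nat. q"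
  let ?d2 = "\<lambda>p q::nat. if q = i then i+1 else i"
  define Z where "Z = (\<lambda>p q. if p = i then (if q = i then - cmat (A (m - i)) else if q = i+1 then - cmat (A (m - (i+1))) else if q = i+2 then 1\<^sub>m n else 0\<^sub>m n n)
     else if p = i+1 then (if q = i then 1\<^sub>m n else 0\<^sub>m n n)
     else if p = i+2 then (if q = i+1 then 1\<^sub>m n else 0\<^sub>m n n)
     else if p = q then 1\<^sub>m n else 0\<^sub>m n n)"
  define W where "W = (\<lambda>p q. if p = i then (if q = i then 1\<^sub>m n else 0\<^sub>m n n)
     else if p = i+1 then (if q = i then horner n m A i + - cmat (A (m - i))
          else if q = i+1 then - cmat (A (m - (i+1))) else if q = i+2 then 1\<^sub>m n else 0\<^sub>m n n) else Z p q)"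
  have cZ: "\<And>p q. Z p q \<in> carrier_mat n n" using cA by (simp add: Z_def)
  have cW: "\<And>p q. W p q \<in> carrier_mat n n" using cZ cA by (simp add: W_def)
  have dZ: "\<And>p q. dim_row (Z p q) = n" "\<And>p q. dim_col (Z p q) = n" using cZ by auto
  have dW: "\<And>p q. dim_row (W p q) = n" "\<And>p q. dim_col (W p q) = n" using cW by auto
  have e0: "gblk n n m m ?F2 * gblk n n m m ?F1 = gblk n n m m Z"
  proof -
    have "gblk n n m m ?F2 * gblk n n m m ?F1 = gblk n n m m (bprod ?F2 ?F1 ?a1 ?a2)"
      by (rule gblk_mult2) (use i cA in \<open>auto simp: ffp_zero split: if_splits\<close>)
    also have "\<dots> = gblk n n m m Z"
    proof (rule gblk_eq)
      fix p q assume pq: "1 \<le> p" "p \<le> m" "1 \<le> q" "q \<le> m"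
      have "p < i \<or> p = i \<or> p = Suc i \<or> p = Suc (Suc i) \<or> Suc (Suc i) < p" by arith
      then show "bprod ?F2 ?F1 ?a1 ?a2 p q = Z p q"
        using pq i cA unfolding bprod_def Z_def
        by (elim disjE) (simp_all add: ffp_def)
    qed
    finally show ?thesis .
  qed
  have e1: "gblk n n m m ?RB * gblk n n m m Z = gblk n n m m W"
  proof -
    have "gblk n n m m ?RB * gblk n n m m Z = gblk n n m m (bprod ?RB Z ?c1 ?c2)"
      by (rule gblk_mult2) (use i cZ dZ in \<open>auto simp: rf_zero split: if_splits\<close>)
    also have "\<dots> = gblk n n m m W"
    proof (rule gblk_eq)
      fix p q assume pq: "1 \<le> p" "p \<le> m" "1 \<le> q" "q \<le> m"
      have "p = i \<or> p = Suc i \<or> (p \<noteq> i \<and> p \<noteq> Suc i)" by arith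
      then show "bprod ?RB Z ?c1 ?c2 p q = W p q"
        using pq i cZ cA unfolding bprod_def W_def
        by (elim disjE) (simp_all add: rf_def Z_def)
    qed
    finally show ?thesis .
  qed
  have e2: "gblk n n m m W * gblk n n m m (qf n i)
     = gblk n n m m (bprod W (qf n i) ?d1 ?d2)"
    by (rule gblk_mult2) (use i cW dW in \<open>auto simp: qf_zero split: if_splits\<close>)
  have lhs: "block_transpose n m (Rm n m A i) * (gblk n n m m ?F2 * gblk n n m m ?F1) * Qm n m i
     = gblk n n m m (bprod W (qf n i) ?d1 ?d2)"
    unfolding Qm_g Rm_g bt_gblk[OF n] e0 e1 e2 ..
  have rhs: "gblk n n m m ?F1 + block_transpose n m (Tm n m A i) = gblk n n m m (\<lambda>p q. ?F1 p q + tf n m A i q p)"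
    unfolding Tm_g bt_gblk[OF n] using cA by (simp add: gblk_add)
  show ?thesis unfolding ff_ffp ar lhs rhs
  proof (rule gblk_eq)
    fix p q assume pq: "1 \<le> p" "p \<le> m" "1 \<le> q" "q \<le> m"
    have "p < i \<or> p = i \<or> p = Suc i \<or> p = Suc (Suc i) \<or> Suc (Suc i) < p"
      "q = i \<or> q = Suc i \<or> (q \<noteq> i \<and> q \<noteq> Suc i)" by arith+
    then show "bprod W (qf n i) ?d1 ?d2 p q = ?F1 p q + tf n m A i q p"
      using pq i cA unfolding bprod_def
      apply (elim disjE)
      apply (simp_all add: W_def Z_def qf_def ffp_def tf_def)
      apply (auto intro!: eq_matI simp: horner_rec_entry[of i] power2_eq_square algebra_simps)
      done
  qed
qed





lemma gblk_zero: "gblk a b m1 m2 (\<lambda>p q. 0\<^sub>m a b) = 0\<^sub>m (a*m1) (b*m2)"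
proof (rule eq_matI)
  fix x y assume "x < dim_row (0\<^sub>m (a*m1) (b*m2) :: 'a mat)" "y < dim_col (0\<^sub>m (a*m1) (b*m2) :: 'a mat)"
  then have xy: "x < a*m1" "y < b*m2" by auto
  then show "gblk a b m1 m2 (\<lambda>p q. 0\<^sub>m a b) $$ (x,y) = (0\<^sub>m (a*m1) (b*m2) :: 'a::zero mat) $$ (x,y)"
    using mod_lt[OF xy(1)] mod_lt[OF xy(2)] by (simp add: gblk_index)
qed auto

lemma x1:
  assumes i: "1 \<le> i" "i < m" and C: "C \<in> carrier_mat n r"
  shows "gblk n n m m (\<lambda>p q. qf n i q p) * gblk n r m 1 (ecf n m r C) = gblk n r m 1 (ecf n m r C)"
proof -
  let ?c1 = "\<lambda>p q::nat. p"
  let ?c2 = "\<lambda>p q::nat. if p = i then i+1 else i"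
  have "gblk n n m m (\<lambda>p q. qf n i q p) * gblk n r m 1 (ecf n m r C) = gblk n r m 1 (bprod (\<lambda>p q. qf n i q p) (ecf n m r C) ?c1 ?c2)"
    by (rule gblk_mult2) (use i C in \<open>auto simp: qf_zero split: if_splits\<close>)
  also have "\<dots> = gblk n r m 1 (ecf n m r C)"
  proof (rule gblk_eq)
    fix p q :: nat assume pq: "1 \<le> p" "p \<le> m" "1 \<le> q" "q \<le> 1"
    have "p = i \<or> p = Suc i \<or> (p \<noteq> i \<and> p \<noteq> Suc i)" by arith
    then show "bprod (\<lambda>p q. qf n i q p) (ecf n m r C) ?c1 ?c2 p q = ecf n m r C p q"
      using pq i C unfolding bprod_def
      by (elim disjE) (simp_all add: qf_def ecf_def)
  qed
  finally show ?thesis .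
qed

lemma x4:
  assumes i: "1 \<le> i" "i < m" and B: "B \<in> carrier_mat r n"
  shows "gblk r n 1 m (erf n m r B) * gblk n n m m (qf n i) = gblk r n 1 m (erf n m r B)"
proof -
  let ?c1 = "\<lambda>p q::nat. m"
  let ?c2 = "\<lambda>p q::nat. i"
  have "gblk r n 1 m (erf n m r B) * gblk n n m m (qf n i) = gblk r n 1 m (bprod (erf n m r B) (qf n i) ?c1 ?c2)"
    by (rule gblk_mult2) (use i B in \<open>auto simp: erf_def\<close>)
  also have "\<dots> = gblk r n 1 m (erf n m r B)"
  proof (rule gblk_eq)
    fix p q :: nat assume pq: "1 \<le> p" "p \<le> 1" "1 \<le> q" "q \<le> m"
    show "bprod (erf n m r B) (qf n i) ?c1 ?c2 p q = erf n m r B p q"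
      using pq i B unfolding bprod_def
      by (simp add: qf_def erf_def)
  qed
  finally show ?thesis .
qed

lemma x2:
  assumes i: "1 \<le> i" "i + 1 = m" and B: "B \<in> carrier_mat r n" and cA: "A (m - i) \<in> carrier_mat n n"
  shows "gblk r n 1 m (erf n m r B) * gblk n n m m (ff n m A (m - i)) * Rm n m A i = gblk r n 1 m (erf n m r B)"
proof -
  have ar: "m - (m - i) = i" using i by auto
  let ?F2 = "ffp n (A (m - i)) i"
  define Y where "Y = (\<lambda>(p::nat) (q::nat). if q = i then - cmat B else 0\<^sub>m r n)"
  have cY: "\<And>p q. Y p q \<in> carrier_mat r n" using B by (simp add: Y_def)
  have dY: "\<And>p q. dim_row (Y p q) = r" "\<And>p q. dim_col (Y p q) = n" using cY by auto
  have e1: "gblk r n 1 m (erf n m r B) * gblk n n m m ?F2 = gblk r n 1 m Y"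
  proof -
    have "gblk r n 1 m (erf n m r B) * gblk n n m m ?F2 = gblk r n 1 m (bprod (erf n m r B) ?F2 (\<lambda>p q. m) (\<lambda>p q. i))"
      by (rule gblk_mult2) (use i B cA in \<open>auto simp: erf_def\<close>)
    also have "\<dots> = gblk r n 1 m Y"
    proof (rule gblk_eq)
      fix p q :: nat assume pq: "1 \<le> p" "p \<le> 1" "1 \<le> q" "q \<le> m"
      show "bprod (erf n m r B) ?F2 (\<lambda>p q. m) (\<lambda>p q. i) p q = Y p q"
        using pq i B cA unfolding bprod_def Y_def
        by (auto simp: ffp_def erf_def)
    qed
    finally show ?thesis .
  qed
  have e2: "gblk r n 1 m Y * gblk n n m m (rf n m A i) = gblk r n 1 m (erf n m r B)"
  proof -
    let ?d1 = "\<lambda>p q::nat. if q = i \<or> q = i+1 then i+1 else q"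
    let ?d2 = "\<lambda>p q::nat. i"
    have "gblk r n 1 m Y * gblk n n m m (rf n m A i) = gblk r n 1 m (bprod Y (rf n m A i) ?d1 ?d2)"
      by (rule gblk_mult2) (use i cY dY in \<open>auto simp: rf_zero rf_zero2 split: if_splits\<close>)
    also have "\<dots> = gblk r n 1 m (erf n m r B)"
    proof (rule gblk_eq)
      fix p q :: nat assume pq: "1 \<le> p" "p \<le> 1" "1 \<le> q" "q \<le> m"
      have "q = i \<or> q = Suc i \<or> (q \<noteq> i \<and> q \<noteq> Suc i)" by arith
      then show "bprod Y (rf n m A i) ?d1 ?d2 p q = erf n m r B p q"
        using pq i B unfolding bprod_def Y_def
        by (elim disjE) (simp_all add: rf_def erf_def)
    qed
    finally show ?thesis .
  qed
  show ?thesis unfolding ff_ffp ar Rm_g e1 e2 ..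
qed

lemma x3:
  assumes n: "0 < n" and i: "1 \<le> i" "i + 1 = m" and C: "C \<in> carrier_mat n r" and cA: "A (m - i) \<in> carrier_mat n n"
  shows "block_transpose n m (Rm n m A i) * (gblk n n m m (ff n m A (m - i)) * gblk n r m 1 (ecf n m r C)) = gblk n r m 1 (ecf n m r C)"
proof -
  have ar: "m - (m - i) = i" using i by auto
  let ?F2 = "ffp n (A (m - i)) i"
  define V where "V = (\<lambda>(p::nat) (q::nat). if p = i then - cmat C else 0\<^sub>m n r)"
  have cV: "\<And>p q. V p q \<in> carrier_mat n r" using C by (simp add: V_def)
  have dV: "\<And>p q. dim_row (V p q) = n" "\<And>p q. dim_col (V p q) = r" using cV by auto
  let ?a1 = "\<lambda>p q::nat. if p = i+1 then i else p"
  let ?a2 = "\<lambda>p q::nat. if p = i \<or> p = i+1 then i+1 else i"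
  have e1: "gblk n n m m ?F2 * gblk n r m 1 (ecf n m r C) = gblk n r m 1 V"
  proof -
    have "gblk n n m m ?F2 * gblk n r m 1 (ecf n m r C) = gblk n r m 1 (bprod ?F2 (ecf n m r C) ?a1 ?a2)"
      by (rule gblk_mult2) (use i C cA in \<open>auto simp: ffp_zero split: if_splits\<close>)
    also have "\<dots> = gblk n r m 1 V"
    proof (rule gblk_eq)
      fix p q :: nat assume pq: "1 \<le> p" "p \<le> m" "1 \<le> q" "q \<le> 1"
      have "p = i \<or> p = Suc i \<or> (p \<noteq> i \<and> p \<noteq> Suc i)" by arith
      then show "bprod ?F2 (ecf n m r C) ?a1 ?a2 p q = V p q"
        using pq i C cA unfolding bprod_def V_def
        by (elim disjE) (simp_all add: ffp_def ecf_def)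
    qed
    finally show ?thesis .
  qed
  have e2: "gblk n n m m (\<lambda>p q. rf n m A i q p) * gblk n r m 1 V = gblk n r m 1 (ecf n m r C)"
  proof -
    let ?c1 = "\<lambda>p q::nat. if p = i \<or> p = i+1 then i+1 else p"
    let ?c2 = "\<lambda>p q::nat. i"
    have "gblk n n m m (\<lambda>p q. rf n m A i q p) * gblk n r m 1 V = gblk n r m 1 (bprod (\<lambda>p q. rf n m A i q p) V ?c1 ?c2)"
      by (rule gblk_mult2) (use i cV dV in \<open>auto simp: rf_zero split: if_splits\<close>)
    also have "\<dots> = gblk n r m 1 (ecf n m r C)"
    proof (rule gblk_eq)
      fix p q :: nat assume pq: "1 \<le> p" "p \<le> m" "1 \<le> q" "q \<le> 1"
      have "p = i \<or> p = Suc i \<or> (p \<noteq> i \<and> p \<noteq> Suc i)" by arith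
      then show "bprod (\<lambda>p q. rf n m A i q p) V ?c1 ?c2 p q = ecf n m r C p q"
        using pq i C unfolding bprod_def V_def
        by (elim disjE) (simp_all add: rf_def ecf_def)
    qed
    finally show ?thesis .
  qed
  show ?thesis unfolding ff_ffp ar Rm_g bt_gblk[OF n] e1 e2 ..
qed

lemma T_absorb:
  fixes T G :: "nat \<Rightarrow> nat \<Rightarrow> complex poly mat"
  assumes cT: "\<And>p q. T p q \<in> carrier_mat n n" and cG: "\<And>p q. G p q \<in> carrier_mat n n"
   and sT: "\<And>p q. \<not> ((p = i \<or> p = i+1) \<and> (q = i \<or> q = i+1)) \<Longrightarrow> T p q = 0\<^sub>m n n"
   and g1: "\<And>q. G i q = (if q = i then 1\<^sub>m n else 0\<^sub>m n n)"
   and g2: "\<And>q. G (i+1) q = (if q = i+1 then 1\<^sub>m n else 0\<^sub>m n n)"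
   and g3: "\<And>p. G p i = (if p = i then 1\<^sub>m n else 0\<^sub>m n n)"
   and g4: "\<And>p. G p (i+1) = (if p = i+1 then 1\<^sub>m n else 0\<^sub>m n n)"
   and i: "1 \<le> i" "i + 1 \<le> m"
  shows "gblk n n m m T * gblk n n m m G = gblk n n m m T \<and> gblk n n m m G * gblk n n m m T = gblk n n m m T"
proof
  have g2': "\<And>q. G (Suc i) q = (if q = Suc i then 1\<^sub>m n else 0\<^sub>m n n)" using g2 by simp
  have g4': "\<And>p. G p (Suc i) = (if p = Suc i then 1\<^sub>m n else 0\<^sub>m n n)" using g4 by simp
  have dT: "\<And>p q. dim_row (T p q) = n" "\<And>p q. dim_col (T p q) = n" using cT by auto
  have dG: "\<And>p q. dim_row (G p q) = n" "\<And>p q. dim_col (G p q) = n" using cG by auto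
  have "gblk n n m m T * gblk n n m m G = gblk n n m m (bprod T G (\<lambda>p q. i) (\<lambda>p q. i+1))"
    by (rule gblk_mult2) (use i cT cG dT dG sT in auto)
  also have "\<dots> = gblk n n m m T"
  proof (rule gblk_eq)
    fix p q :: nat assume pq: "1 \<le> p" "p \<le> m" "1 \<le> q" "q \<le> m"
    have "q = i \<or> q = Suc i \<or> (q \<noteq> i \<and> q \<noteq> Suc i)" by arith
    then show "bprod T G (\<lambda>p q. i) (\<lambda>p q. i+1) p q = T p q"
      unfolding bprod_def using dT cT sT[of p q] by (elim disjE) (simp_all add: g1 g2')
  qed
  finally show "gblk n n m m T * gblk n n m m G = gblk n n m m T" .
  have "gblk n n m m G * gblk n n m m T = gblk n n m m (bprod G T (\<lambda>p q. i) (\<lambda>p q. i+1))"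
    by (rule gblk_mult2) (use i cT cG dT dG sT in auto)
  also have "\<dots> = gblk n n m m T"
  proof (rule gblk_eq)
    fix p q :: nat assume pq: "1 \<le> p" "p \<le> m" "1 \<le> q" "q \<le> m"
    have "p = i \<or> p = Suc i \<or> (p \<noteq> i \<and> p \<noteq> Suc i)" by arith
    then show "bprod G T (\<lambda>p q. i) (\<lambda>p q. i+1) p q = T p q"
      unfolding bprod_def using dT cT sT[of p q] by (elim disjE) (simp_all add: g3 g4')
  qed
  finally show "gblk n n m m G * gblk n n m m T = gblk n n m m T" .
qed

lemma T_EC:
  fixes T :: "nat \<Rightarrow> nat \<Rightarrow> complex poly mat"
  assumes cT: "\<And>p q. T p q \<in> carrier_mat n n" and cE: "\<And>p q. E p q \<in> carrier_mat n r"
   and sT: "\<And>p q. \<not> ((p = i \<or> p = i+1) \<and> (q = i \<or> q = i+1)) \<Longrightarrow> T p q = 0\<^sub>m n n"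
   and e1: "\<And>q. E i q = 0\<^sub>m n r" and e2: "\<And>q. E (i+1) q = 0\<^sub>m n r"
   and i: "1 \<le> i" "i + 1 \<le> m"
  shows "gblk n n m m T * gblk n r m 1 E = 0\<^sub>m (n*m) r"
proof -
  have dT: "\<And>p q. dim_row (T p q) = n" "\<And>p q. dim_col (T p q) = n" using cT by auto
  have dE: "\<And>p q. dim_row (E p q) = n" "\<And>p q. dim_col (E p q) = r" using cE by auto
  have "gblk n n m m T * gblk n r m 1 E = gblk n r m 1 (bprod T E (\<lambda>p q. i) (\<lambda>p q. i+1))"
    by (rule gblk_mult2) (use i cT cE dT dE sT in auto)
  also have "\<dots> = gblk n r m 1 (\<lambda>p q. 0\<^sub>m n r)"
    using e2 by (intro gblk_eq) (simp add: bprod_def e1 dT)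
  finally show ?thesis by (simp add: gblk_zero)
qed

lemma ER_T:
  fixes T :: "nat \<Rightarrow> nat \<Rightarrow> complex poly mat"
  assumes cT: "\<And>p q. T p q \<in> carrier_mat n n" and cE: "\<And>p q. E p q \<in> carrier_mat r n"
   and sT: "\<And>p q. \<not> ((p = i \<or> p = i+1) \<and> (q = i \<or> q = i+1)) \<Longrightarrow> T p q = 0\<^sub>m n n"
   and e1: "\<And>p. E p i = 0\<^sub>m r n" and e2: "\<And>p. E p (i+1) = 0\<^sub>m r n"
   and i: "1 \<le> i" "i + 1 \<le> m"
  shows "gblk r n 1 m E * gblk n n m m T = 0\<^sub>m r (n*m)"
proof -
  have dT: "\<And>p q. dim_row (T p q) = n" "\<And>p q. dim_col (T p q) = n" using cT by auto
  have dE: "\<And>p q. dim_row (E p q) = r" "\<And>p q. dim_col (E p q) = n" using cE by auto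
  have "gblk r n 1 m E * gblk n n m m T = gblk r n 1 m (bprod E T (\<lambda>p q. i) (\<lambda>p q. i+1))"
    by (rule gblk_mult2) (use i cT cE dT dE sT in auto)
  also have "\<dots> = gblk r n 1 m (\<lambda>p q. 0\<^sub>m r n)"
    using e2 by (intro gblk_eq) (simp add: bprod_def e1 dT)
  finally show ?thesis by (simp add: gblk_zero)
qed

lemma tf_supp: "\<not> ((p = i \<or> p = i+1) \<and> (q = i \<or> q = i+1)) \<Longrightarrow> tf n m A i p q = 0\<^sub>m n n"
  by (auto simp: tf_def)




lemma bt_dims[simp]: "dim_row (block_transpose n m H) = n*m" "dim_col (block_transpose n m H) = n*m"
  by (simp_all add: block_transpose_def)

lemma diag2_mult': fixes X :: "'a::comm_ring_1 mat"
  shows "dim_row X = N \<Longrightarrow> dim_col X = N \<Longrightarrow> dim_row Y = N \<Longrightarrow> dim_col Y = N \<Longrightarrow>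
   dim_row Z = r \<Longrightarrow> dim_col Z = r \<Longrightarrow> dim_row W = r \<Longrightarrow> dim_col W = r \<Longrightarrow>
   diag2 N r X Z * diag2 N r Y W = diag2 N r (X*Y) (Z*W)"
  by (rule diag2_mult) (auto intro: carrier_matI)

lemma diag2_add': fixes X :: "'a::comm_ring_1 mat"
  shows "dim_row X = N \<Longrightarrow> dim_col X = N \<Longrightarrow> dim_row Y = N \<Longrightarrow> dim_col Y = N \<Longrightarrow>
   dim_row Z = r \<Longrightarrow> dim_col Z = r \<Longrightarrow> dim_row W = r \<Longrightarrow> dim_col W = r \<Longrightarrow>
   diag2 N r X Z + diag2 N r Y W = diag2 N r (X+Y) (Z+W)"
  by (rule diag2_add) (auto intro: carrier_matI)

lemma fb_diag2': fixes A :: "'a::comm_ring_1 mat"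
  shows "dim_row A = N \<Longrightarrow> dim_col A = N \<Longrightarrow> dim_row B = N \<Longrightarrow> dim_col B = r \<Longrightarrow>
    dim_row C = r \<Longrightarrow> dim_col C = N \<Longrightarrow> dim_row D = r \<Longrightarrow> dim_col D = r \<Longrightarrow>
    dim_row X = N \<Longrightarrow> dim_col X = N \<Longrightarrow> dim_row Z = r \<Longrightarrow> dim_col Z = r \<Longrightarrow>
    four_block_mat A B C D * diag2 N r X Z = four_block_mat (A*X) (B*Z) (C*X) (D*Z)"
  by (rule fb_diag2) (auto intro: carrier_matI)

lemma diag2_fb': fixes A :: "'a::comm_ring_1 mat"
  shows "dim_row A = N \<Longrightarrow> dim_col A = N \<Longrightarrow> dim_row B = N \<Longrightarrow> dim_col B = r \<Longrightarrow>
    dim_row C = r \<Longrightarrow> dim_col C = N \<Longrightarrow> dim_row D = r \<Longrightarrow> dim_col D = r \<Longrightarrow>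
    dim_row X = N \<Longrightarrow> dim_col X = N \<Longrightarrow> dim_row Z = r \<Longrightarrow> dim_col Z = r \<Longrightarrow>
    diag2 N r X Z * four_block_mat A B C D = four_block_mat (X*A) (X*B) (Z*C) (Z*D)"
  by (rule diag2_fb) (auto intro: carrier_matI)

lemma fb_add_diag2': fixes A :: "'a::comm_ring_1 mat"
  shows "dim_row A = N \<Longrightarrow> dim_col A = N \<Longrightarrow> dim_row B = N \<Longrightarrow> dim_col B = r \<Longrightarrow>
    dim_row C = r \<Longrightarrow> dim_col C = N \<Longrightarrow> dim_row D = r \<Longrightarrow> dim_col D = r \<Longrightarrow>
    dim_row X = N \<Longrightarrow> dim_col X = N \<Longrightarrow> dim_row Z = r \<Longrightarrow> dim_col Z = r \<Longrightarrow>
    four_block_mat A B C D + diag2 N r X Z = four_block_mat (A+X) B C (D+Z)"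
  by (rule fb_add_diag2) (auto intro: carrier_matI)

lemma sys_dims[simp]: "dim_row (Qm n m i) = n*m" "dim_col (Qm n m i) = n*m"
  "dim_row (Rm n m A i) = n*m" "dim_col (Rm n m A i) = n*m"
  "dim_row (Tm n m A i) = n*m" "dim_col (Tm n m A i) = n*m"
  "dim_row (Dm n m A i) = n*m" "dim_col (Dm n m A i) = n*m"
  by (simp_all add: Qm_g Rm_g Tm_g Dm_g)

lemma f0_ff: "gblk n n m m (f0 n m A) = gblk n n m m (ff n m A 0)"
  by (rule gblk_eq) (auto simp: f0_def ff_def)

lemma ffp_g:
  assumes "i + 2 \<le> (t::nat)"
  shows "\<And>q. ffp n X t i q = (if q = i then 1\<^sub>m n else 0\<^sub>m n n)"
   "\<And>q. ffp n X t (i+1) q = (if q = i+1 then 1\<^sub>m n else 0\<^sub>m n n)"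
   "\<And>p. ffp n X t p i = (if p = i then 1\<^sub>m n else 0\<^sub>m n n)"
   "\<And>p. ffp n X t p (i+1) = (if p = i+1 then 1\<^sub>m n else 0\<^sub>m n n)"
  using assms by (auto simp: ffp_def)

lemma f0_g:
  assumes "i + 2 \<le> (m::nat)"
  shows "\<And>q. f0 n m A i q = (if q = i then 1\<^sub>m n else 0\<^sub>m n n)"
   "\<And>q. f0 n m A (i+1) q = (if q = i+1 then 1\<^sub>m n else 0\<^sub>m n n)"
   "\<And>p. f0 n m A p i = (if p = i then 1\<^sub>m n else 0\<^sub>m n n)"
   "\<And>p. f0 n m A p (i+1) = (if p = i+1 then 1\<^sub>m n else 0\<^sub>m n n)"
  using assms by (auto simp: f0_def)

theorem lemma4p10:
  fixes n m r i :: nat and A :: "nat \<Rightarrow> complex mat"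
    and Amat E B C :: "complex mat"
  assumes hA: "\<And>j. j \<le> m \<Longrightarrow> A j \<in> carrier_mat n n"
    and hAm: "A m \<noteq> 0\<^sub>m n n"
    and hAmat: "Amat \<in> carrier_mat r r" and hE: "E \<in> carrier_mat r r"
    and hB: "B \<in> carrier_mat r n" and hC: "C \<in> carrier_mat n r"
    and hi: "1 \<le> i" "i \<le> m - 1"
  defines "MM \<equiv> sys_fiedler n m r A Amat E B C"
  shows
    "(QcalB n m r i * (lam \<cdot>\<^sub>m Dcal n m r A E i) * Rcal n m r A i
        = lam \<cdot>\<^sub>m Dcal n m r A E (i + 1) + Tcal n m r A i
     \<and> QcalB n m r i * (MM (m - (i + 1)) * MM (m - i)) * Rcal n m r A i
        = MM (m - (i + 1)) + Tcal n m r A i)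
   \<and> (RcalB n m r A i * (lam \<cdot>\<^sub>m Dcal n m r A E i) * Qcal n m r i
        = lam \<cdot>\<^sub>m Dcal n m r A E (i + 1) + TcalB n m r A i
     \<and> RcalB n m r A i * (MM (m - i) * MM (m - (i + 1))) * Qcal n m r i
        = MM (m - (i + 1)) + TcalB n m r A i)
   \<and> (\<forall>j. j + i + 2 \<le> m \<longrightarrow>
        Tcal n m r A i * MM j = Tcal n m r A i \<and> MM j * Tcal n m r A i = Tcal n m r A i
      \<and> TcalB n m r A i * MM j = TcalB n m r A i \<and> MM j * TcalB n m r A i = TcalB n m r A i)"
proof -
  have n: "0 < n"
  proof (rule ccontr)
    assume "\<not> 0 < n"
    then have "n = 0" by simp
    then have "A m = 0\<^sub>m n n" using hA[of m] by (intro eq_matI) auto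
    then show False using hAm by simp
  qed
  have m: "2 \<le> m" "i < m" using hi by auto
  have i1: "1 \<le> i" "i + 1 \<le> m" using hi by auto
  let ?N = "n*m"
  have cE: "- cmat E \<in> carrier_mat r r" "lam \<cdot>\<^sub>m - cmat E \<in> carrier_mat r r" using hE by auto
  have cQB: "block_transpose n m (Qm n m i) \<in> carrier_mat ?N ?N" by (simp add: block_transpose_def)
  have cRB: "block_transpose n m (Rm n m A i) \<in> carrier_mat ?N ?N" by (simp add: block_transpose_def)
  have cTB: "block_transpose n m (Tm n m A i) \<in> carrier_mat ?N ?N" by (simp add: block_transpose_def)
  have cQ: "Qm n m i \<in> carrier_mat ?N ?N" by (simp add: Qm_g)
  have cR: "Rm n m A i \<in> carrier_mat ?N ?N" by (simp add: Rm_g)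
  have cT: "Tm n m A i \<in> carrier_mat ?N ?N" by (simp add: Tm_g)
  have cD: "\<And>k. Dm n m A k \<in> carrier_mat ?N ?N" by (simp add: Dm_g)
  have QcalB: "QcalB n m r i = diag2 ?N r (block_transpose n m (Qm n m i)) (1\<^sub>m r)"
    by (simp add: QcalB_def sys_bt_diag_def diag2_def)
  have RcalB: "RcalB n m r A i = diag2 ?N r (block_transpose n m (Rm n m A i)) (1\<^sub>m r)"
    by (simp add: RcalB_def sys_bt_diag_def diag2_def)
  have TcalB: "TcalB n m r A i = diag2 ?N r (block_transpose n m (Tm n m A i)) (0\<^sub>m r r)"
    by (simp add: TcalB_def sys_bt_diag_def diag2_def)
  note defs = Qcal_def Rcal_def Tcal_def Dcal_def QcalB RcalB TcalB
  have A1: "QcalB n m r i * (lam \<cdot>\<^sub>m Dcal n m r A E i) * Rcal n m r A i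
        = lam \<cdot>\<^sub>m Dcal n m r A E (i + 1) + Tcal n m r A i"
    unfolding defs using cE cQB cR cT cD hE
    by (simp add: diag2_smult diag2_mult diag2_add a1_nm[OF n hi])
  have B1: "RcalB n m r A i * (lam \<cdot>\<^sub>m Dcal n m r A E i) * Qcal n m r i
        = lam \<cdot>\<^sub>m Dcal n m r A E (i + 1) + TcalB n m r A i"
    unfolding defs using cE cRB cQ cTB cD hE
    by (simp add: diag2_smult diag2_mult diag2_add b1_nm[OF n hi])
  have km: "0 < m - i" "m - i < m" using hi by auto
  have MMi: "MM (m - i) = diag2 ?N r (gblk n n m m (ff n m A (m - i))) (1\<^sub>m r)"
    unfolding MM_def by (rule MM_mid[OF km]) (use hA in auto)
  have cF: "\<And>k. k \<le> m \<Longrightarrow> gblk n n m m (ff n m A k) \<in> carrier_mat ?N ?N" by simp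
  have cEC: "gblk n r m 1 (ecf n m r C) \<in> carrier_mat ?N r" using gblk_dim(3)[of n r m 1] by simp
  have cER: "gblk r n 1 m (erf n m r B) \<in> carrier_mat r ?N" using gblk_dim(3)[of r n 1 m] by simp
  have cAm: "- cmat Amat \<in> carrier_mat r r" using hAmat by simp
  have A2B2: "QcalB n m r i * (MM (m - (i + 1)) * MM (m - i)) * Rcal n m r A i
        = MM (m - (i + 1)) + Tcal n m r A i \<and>
      RcalB n m r A i * (MM (m - i) * MM (m - (i + 1))) * Qcal n m r i
        = MM (m - (i + 1)) + TcalB n m r A i"
  proof (cases "i + 1 < m")
    case True
    have km': "0 < m - (i+1)" "m - (i+1) < m" using True hi by auto
    have MMi': "MM (m - (i+1)) = diag2 ?N r (gblk n n m m (ff n m A (m - (i+1)))) (1\<^sub>m r)"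
      unfolding MM_def by (rule MM_mid[OF km']) (use hA in auto)
    show ?thesis unfolding defs MMi MMi' using cQB cRB cQ cR cT cTB
      by (simp add: diag2_mult' diag2_add' a2_nm[OF n i1 hA, simplified] b2_nm[OF n i1 hA, simplified])
  next
    case False
    then have im: "i + 1 = m" using hi by auto
    have MM0: "MM (m - (i+1)) = four_block_mat (gblk n n m m (ff n m A (m - (i+1)))) (gblk n r m 1 (ecf n m r C))
       (gblk r n 1 m (erf n m r B)) (- cmat Amat)"
      unfolding MM_def using im MM_0[of m A n C r B Amat E] hA hC hB hAmat f0_ff by auto
    have x1': "block_transpose n m (Qm n m i) * gblk n r m 1 (ecf n m r C) = gblk n r m 1 (ecf n m r C)"
      unfolding Qm_g bt_gblk[OF n] using x1[OF hi(1) m(2) hC] .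
    have x4': "gblk r n 1 m (erf n m r B) * Qm n m i = gblk r n 1 m (erf n m r B)"
      unfolding Qm_g using x4[OF hi(1) m(2) hB] .
    have x2': "gblk r n 1 m (erf n m r B) * gblk n n m m (ff n m A (m - i)) * Rm n m A i = gblk r n 1 m (erf n m r B)"
      using x2[OF hi(1) im hB] hA by simp
    have x3': "block_transpose n m (Rm n m A i) * (gblk n n m m (ff n m A (m - i)) * gblk n r m 1 (ecf n m r C)) = gblk n r m 1 (ecf n m r C)"
      using x3[OF n hi(1) im hC] hA by simp
    note c = cQB cRB cQ cR cT cTB cF cEC cER cAm
    have dAm: "dim_row Amat = r" "dim_col Amat = r" using hAmat by auto
    have F1: "gblk n n m m (ff n m A (m - i)) \<in> carrier_mat ?N ?N" "gblk n n m m (ff n m A (m - (i+1))) \<in> carrier_mat ?N ?N"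
      by simp_all
    show ?thesis unfolding defs MMi MM0 using c F1 dAm
      by (simp add: fb_diag2' diag2_fb' fb_add_diag2' a2_nm[OF n i1 hA, simplified] b2_nm[OF n i1 hA, simplified] x1'[simplified] x2'[simplified] x3'[simplified] x4'[simplified])
  qed
  have Cpart: "\<forall>j. j + i + 2 \<le> m \<longrightarrow>
        Tcal n m r A i * MM j = Tcal n m r A i \<and> MM j * Tcal n m r A i = Tcal n m r A i
      \<and> TcalB n m r A i * MM j = TcalB n m r A i \<and> MM j * TcalB n m r A i = TcalB n m r A i"
  proof (intro allI impI)
    fix j assume j: "j + i + 2 \<le> m"
    have sT: "\<And>p q. \<not> ((p = i \<or> p = i+1) \<and> (q = i \<or> q = i+1)) \<Longrightarrow> tf n m A i p q = 0\<^sub>m n n"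
      by (rule tf_supp)
    have sTB: "\<And>p q. \<not> ((p = i \<or> p = i+1) \<and> (q = i \<or> q = i+1)) \<Longrightarrow> tf n m A i q p = 0\<^sub>m n n"
      by (rule tf_supp) auto
    have TcalG: "Tcal n m r A i = diag2 ?N r (gblk n n m m (tf n m A i)) (0\<^sub>m r r)"
      by (simp add: Tcal_def Tm_g)
    have TcalBG: "TcalB n m r A i = diag2 ?N r (gblk n n m m (\<lambda>p q. tf n m A i q p)) (0\<^sub>m r r)"
      by (simp add: TcalB Tm_g bt_gblk[OF n])
    show "Tcal n m r A i * MM j = Tcal n m r A i \<and> MM j * Tcal n m r A i = Tcal n m r A i
      \<and> TcalB n m r A i * MM j = TcalB n m r A i \<and> MM j * TcalB n m r A i = TcalB n m r A i"
    proof (cases "j = 0")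
      case False
      have kj: "0 < j" "j < m" using False j by auto
      have MMj: "MM j = diag2 ?N r (gblk n n m m (ffp n (A j) (m - j))) (1\<^sub>m r)"
        unfolding MM_def ff_ffp[symmetric] by (rule MM_mid[OF kj]) (use hA kj in auto)
      have cG: "\<And>p q. ffp n (A j) (m - j) p q \<in> carrier_mat n n" using hA kj by auto
      have pos: "i + 2 \<le> m - j" using j by auto
      note g = ffp_g[OF pos, of n "A j"]
      have TA: "gblk n n m m (tf n m A i) * gblk n n m m (ffp n (A j) (m - j)) = gblk n n m m (tf n m A i) \<and>
         gblk n n m m (ffp n (A j) (m - j)) * gblk n n m m (tf n m A i) = gblk n n m m (tf n m A i)"
        by (rule T_absorb[OF _ cG sT g i1]) simp
      have TBA: "gblk n n m m (\<lambda>p q. tf n m A i q p) * gblk n n m m (ffp n (A j) (m - j)) = gblk n n m m (\<lambda>p q. tf n m A i q p) \<and>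
         gblk n n m m (ffp n (A j) (m - j)) * gblk n n m m (\<lambda>p q. tf n m A i q p) = gblk n n m m (\<lambda>p q. tf n m A i q p)"
        by (rule T_absorb[OF _ cG sTB g i1]) simp
      show ?thesis unfolding TcalG TcalBG MMj using TA TBA
        by (simp add: diag2_mult')
    next
      case True
      have MMj: "MM j = four_block_mat (gblk n n m m (f0 n m A))
          (gblk n r m 1 (ecf n m r C)) (gblk r n 1 m (erf n m r B)) (- cmat Amat)"
        unfolding MM_def True by (rule MM_0) (use hA hC hB hAmat m in auto)
      have cG: "\<And>p q. f0 n m A p q \<in> carrier_mat n n" using hA by auto
      have pos: "i + 2 \<le> m" using j by auto
      note g = f0_g[OF pos, of n A]
      have TA: "gblk n n m m (tf n m A i) * gblk n n m m (f0 n m A) = gblk n n m m (tf n m A i) \<and>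
         gblk n n m m (f0 n m A) * gblk n n m m (tf n m A i) = gblk n n m m (tf n m A i)"
        by (rule T_absorb[OF _ cG sT g i1]) simp
      have TBA: "gblk n n m m (\<lambda>p q. tf n m A i q p) * gblk n n m m (f0 n m A) = gblk n n m m (\<lambda>p q. tf n m A i q p) \<and>
         gblk n n m m (f0 n m A) * gblk n n m m (\<lambda>p q. tf n m A i q p) = gblk n n m m (\<lambda>p q. tf n m A i q p)"
        by (rule T_absorb[OF _ cG sTB g i1]) simp
      have e1: "\<And>q. ecf n m r C i q = 0\<^sub>m n r" "\<And>q. ecf n m r C (i+1) q = 0\<^sub>m n r" using pos by (auto simp: ecf_def)
      have e2: "\<And>p. erf n m r B p i = 0\<^sub>m r n" "\<And>p. erf n m r B p (i+1) = 0\<^sub>m r n" using pos by (auto simp: erf_def)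
      have TE: "gblk n n m m (tf n m A i) * gblk n r m 1 (ecf n m r C) = 0\<^sub>m ?N r"
        by (rule T_EC[OF _ _ sT e1 i1]) (use hC in auto)
      have TBE: "gblk n n m m (\<lambda>p q. tf n m A i q p) * gblk n r m 1 (ecf n m r C) = 0\<^sub>m ?N r"
        by (rule T_EC[OF _ _ sTB e1 i1]) (use hC in auto)
      have ET: "gblk r n 1 m (erf n m r B) * gblk n n m m (tf n m A i) = 0\<^sub>m r ?N"
        by (rule ER_T[OF _ _ sT e2 i1]) (use hB in auto)
      have ETB: "gblk r n 1 m (erf n m r B) * gblk n n m m (\<lambda>p q. tf n m A i q p) = 0\<^sub>m r ?N"
        by (rule ER_T[OF _ _ sTB e2 i1]) (use hB in auto)
      have dAm: "dim_row Amat = r" "dim_col Amat = r" using hAmat by auto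
      show ?thesis unfolding TcalG TcalBG MMj using TA TBA TE TBE ET ETB dAm
        by (simp add: diag2_fb' fb_diag2') (simp add: diag2_def)
    qed
  qed
  show ?thesis using A1 B1 A2B2 Cpart by blast
qed


end
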